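(* Consider the online convex optimization protocol (with unbounded horizon) and the algorithm AOA described in the context, under the standing assumptions (A1)–(A3) (holding for all rounds $t\ge1$). Then for any interval $I=[r,s]\subseteq\mathbb{N}$ and any comparators $\mathbf{u}_r,\ldots,\mathbf{u}_{s+1}\in\Omega$, \[ \sum_{t=r}^s f_t(\mathbf{w}_t)-\sum_{t=r}^s f_t(\mathbf{u}_t)\le\Big(14\sqrt{c'(s)}+3\big[1+2\ln(k_I+1)\big]+23DG\Big)\sqrt{|I|}+5G\sqrt{DP_I}\sqrt{|I|}=O\big(\sqrt{|I|(\log s+P_I)}\big), \] where $c'(s)=1+\ln s+\ln(1+\log_2 s)+\ln\frac{5+3\ln(1+s)}{2}$, $P_I=\sum_{t=r}^s\|\mathbf{u}_{t+1}-\mathbf{u}_t\|_2$, and $k_I=\big\lfloor\tfrac12\log_2(1+\tfrac{4P_I}{7D})\big\rfloor+1$.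
   Context: Online convex optimization: $\Omega\subseteq\mathbb{R}^d$ convex; in round $t=1,2,\ldots$ the learner plays $\mathbf{w}_t\in\Omega$, then a convex $f_t:\Omega\to\mathbb{R}$ is revealed. Assumptions: (A1) $\|\nabla f_t(\mathbf{w})\|_2\le G$ for all $\mathbf{w}\in\Omega$, $t$; (A2) $\mathbf{0}\in\Omega$ and the diameter of $\Omega$ is at most $D$; (A3) $0\le f_t\le1$ on $\Omega$. $\Pi_\Omega$ is Euclidean projection; online gradient descent (OGD) with step $\eta$ updates $\mathbf{v}\mapsto\Pi_\Omega[\mathbf{v}-\eta\nabla f_t(\mathbf{v})]$. Geometric covering intervals: $\mathcal{I}=\bigcup_{k\ge0}\mathcal{I}_k$, $\mathcal{I}_k=\{[i2^k,(i+1)2^k-1]: i=1,2,\ldots\}$. Ader with input length $L$ (run over $L$ consecutive rounds): let $N=\lceil\frac12\log_2(1+4L/7)\rceil+1$ and step sizes $\eta_i=\frac{2^{i-1}D}{G}\sqrt{\frac{7}{2L}}$, $i=1,\ldots,N$; run one OGD instance (arbitrary initial point) per $\eta_i$, with initial weights $p_{1,\eta_i}=\frac{C}{i(i+1)}$, $C=1+\frac1N$; play $\sum_i p_{t,\eta_i}\mathbf{w}_{t,\eta_i}$ and update $p_{t+1,\eta}\propto p_{t,\eta}e^{-\alpha f_t(\mathbf{w}_{t,\eta})}$ (normalized to sum to $1$) with $\alpha=\sqrt{8/L}$. Algorithm AOA: for each $J\in\mathcal{I}$ an expert $E_J$ runs Ader with input $|J|$ during rounds $t\in J$ (created at round $\min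 J$, removed after round $\max J$), producing $\mathbf{w}_{t,J}$. Active experts at round $t$: $\mathcal{A}_t=\{E_J:J\in\mathcal{I},t\in J\}$. Combination by AdaNormalHedge: $\Phi(R,C)=\exp([R]_+^2/(3C))$, $\Phi(0,0)=1$, $w(R,C)=\tfrac12(\Phi(R+1,C+1)-\Phi(R-1,C+1))$, $R_{t-1,J}=\sum_{u=\min J}^{t-1}(f_u(\mathbf{w}_u)-f_u(\mathbf{w}_{u,J}))$, $C_{t-1,J}=\sum_{u=\min J}^{t-1}|f_u(\mathbf{w}_u)-f_u(\mathbf{w}_{u,J})|$, $p_{t,J}=w(R_{t-1,J},C_{t-1,J})/\sum_{E_{J'}\in\mathcal{A}_t}w(R_{t-1,J'},C_{t-1,J'})$, and $\mathbf{w}_t=\sum_{E_J\in\mathcal{A}_t}p_{t,J}\mathbf{w}_{t,J}$. *)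

theory Defs
  imports "HOL-Analysis.Analysis"
begin

definition geo_intervals :: "nat set set" where
  "geo_intervals = {{i * 2^k .. (i+1) * 2^k - 1} | i k. i \<ge> 1}"

definition active :: "nat \<Rightarrow> nat set set" where
  "active t = {J \<in> geo_intervals. t \<in> J}"

text \<open>OGD with step eta started at round a with initial point x0; argument k is the
  offset, i.e. the point played at round a + k. Euclidean projection = closest_point.\<close>
primrec ogd :: "(nat \<Rightarrow> 'a \<Rightarrow> 'a) \<Rightarrow> 'a set \<Rightarrow> real \<Rightarrow> nat \<Rightarrow> 'a \<Rightarrow> nat \<Rightarrow> 'a::euclidean_space" where
  "ogd g \<Omega> \<eta> a x0 0 = x0"
| "ogd g \<Omega> \<eta> a x0 (Suc k) =
     closest_point \<Omega> (ogd g \<Omega> \<eta> a x0 k - \<eta> *\<^sub>R g (a + k) (ogd g \<Omega> \<eta> a x0 k))"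

definition ader_N :: "nat \<Rightarrow> nat" where
  "ader_N L = nat \<lceil>log 2 (1 + 4 * real L / 7) / 2\<rceil> + 1"

definition ader_eta :: "real \<Rightarrow> real \<Rightarrow> nat \<Rightarrow> nat \<Rightarrow> real" where
  "ader_eta D G L i = 2 ^ (i - 1) * D / G * sqrt (7 / (2 * real L))"

definition ader_alpha :: "nat \<Rightarrow> real" where
  "ader_alpha L = sqrt (8 / real L)"

definition ader_p1 :: "nat \<Rightarrow> nat \<Rightarrow> real" where
  "ader_p1 L i = (1 + 1 / real (ader_N L)) / (real i * (real i + 1))"

definition ader_expert ::
  "(nat \<Rightarrow> 'a \<Rightarrow> 'a) \<Rightarrow> 'a set \<Rightarrow> real \<Rightarrow> real \<Rightarrow> nat \<Rightarrow> nat \<Rightarrow> (nat \<Rightarrow> 'a) \<Rightarrow> nat \<Rightarrow> nat \<Rightarrow> 'a::euclidean_space" where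
  "ader_expert g \<Omega> D G L a x0 i k = ogd g \<Omega> (ader_eta D G L i) a (x0 i) k"

primrec ader_weight ::
  "(nat \<Rightarrow> 'a::euclidean_space \<Rightarrow> real) \<Rightarrow> (nat \<Rightarrow> 'a \<Rightarrow> 'a) \<Rightarrow> 'a set \<Rightarrow> real \<Rightarrow> real \<Rightarrow> nat \<Rightarrow> nat \<Rightarrow> (nat \<Rightarrow> 'a)
    \<Rightarrow> nat \<Rightarrow> nat \<Rightarrow> real" where
  "ader_weight f g \<Omega> D G L a x0 0 i = ader_p1 L i"
| "ader_weight f g \<Omega> D G L a x0 (Suc k) i =
     ader_weight f g \<Omega> D G L a x0 k i
       * exp (- ader_alpha L * f (a + k) (ader_expert g \<Omega> D G L a x0 i k))
     / (\<Sum>j = 1..ader_N L. ader_weight f g \<Omega> D G L a x0 k j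
          * exp (- ader_alpha L * f (a + k) (ader_expert g \<Omega> D G L a x0 j k)))"

definition ader_play ::
  "(nat \<Rightarrow> 'a::euclidean_space \<Rightarrow> real) \<Rightarrow> (nat \<Rightarrow> 'a \<Rightarrow> 'a) \<Rightarrow> 'a set \<Rightarrow> real \<Rightarrow> real \<Rightarrow> nat \<Rightarrow> nat \<Rightarrow> (nat \<Rightarrow> 'a)
    \<Rightarrow> nat \<Rightarrow> 'a::euclidean_space" where
  "ader_play f g \<Omega> D G L a x0 k =
     (\<Sum>i = 1..ader_N L. ader_weight f g \<Omega> D G L a x0 k i *\<^sub>R ader_expert g \<Omega> D G L a x0 i k)"

text \<open>Expert E_J: Ader with input |J| run over the rounds of J; x0 J i is the initial point
  of its i-th OGD instance. Value at round t (meaningful for t in J).\<close>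
definition expert_play ::
  "(nat \<Rightarrow> 'a \<Rightarrow> real) \<Rightarrow> (nat \<Rightarrow> 'a \<Rightarrow> 'a) \<Rightarrow> 'a set \<Rightarrow> real \<Rightarrow> real \<Rightarrow> (nat set \<Rightarrow> nat \<Rightarrow> 'a)
    \<Rightarrow> nat set \<Rightarrow> nat \<Rightarrow> 'a::euclidean_space" where
  "expert_play f g \<Omega> D G x0 J t = ader_play f g \<Omega> D G (card J) (Min J) (x0 J) (t - Min J)"

definition anh_Phi :: "real \<Rightarrow> real \<Rightarrow> real" where
  "anh_Phi R C = exp ((max R 0)\<^sup>2 / (3 * C))"   (* note anh_Phi 0 0 = exp 0 = 1 *)

definition anh_w :: "real \<Rightarrow> real \<Rightarrow> real" where
  "anh_w R C = (anh_Phi (R + 1) (C + 1) - anh_Phi (R - 1) (C + 1)) / 2"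

text \<open>Given the list hs = [w_1, ..., w_n] of AOA's previous plays, the play w_{n+1}.\<close>
definition aoa_next ::
  "(nat \<Rightarrow> 'a \<Rightarrow> real) \<Rightarrow> (nat \<Rightarrow> 'a \<Rightarrow> 'a) \<Rightarrow> 'a set \<Rightarrow> real \<Rightarrow> real \<Rightarrow> (nat set \<Rightarrow> nat \<Rightarrow> 'a)
    \<Rightarrow> 'a list \<Rightarrow> 'a::euclidean_space" where
  "aoa_next f g \<Omega> D G x0 hs =
    (let t = length hs + 1;
         w = (\<lambda>u. hs ! (u - 1));
         R = (\<lambda>J. \<Sum>u \<in> {Min J..<t}. f u (w u) - f u (expert_play f g \<Omega> D G x0 J u));
         C = (\<lambda>J. \<Sum>u \<in> {Min J..<t}. \<bar>f u (w u) - f u (expert_play f g \<Omega> D G x0 J u)\<bar>);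
         W = (\<lambda>J. anh_w (R J) (C J))
     in \<Sum>J \<in> active t. (W J / (\<Sum>J' \<in> active t. W J')) *\<^sub>R expert_play f g \<Omega> D G x0 J t)"

primrec aoa_hist ::
  "(nat \<Rightarrow> 'a \<Rightarrow> real) \<Rightarrow> (nat \<Rightarrow> 'a \<Rightarrow> 'a) \<Rightarrow> 'a set \<Rightarrow> real \<Rightarrow> real \<Rightarrow> (nat set \<Rightarrow> nat \<Rightarrow> 'a)
    \<Rightarrow> nat \<Rightarrow> 'a::euclidean_space list" where
  "aoa_hist f g \<Omega> D G x0 0 = []"
| "aoa_hist f g \<Omega> D G x0 (Suc n) = aoa_hist f g \<Omega> D G x0 n @ [aoa_next f g \<Omega> D G x0 (aoa_hist f g \<Omega> D G x0 n)]"

definition aoa ::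
  "(nat \<Rightarrow> 'a \<Rightarrow> real) \<Rightarrow> (nat \<Rightarrow> 'a \<Rightarrow> 'a) \<Rightarrow> 'a set \<Rightarrow> real \<Rightarrow> real \<Rightarrow> (nat set \<Rightarrow> nat \<Rightarrow> 'a)
    \<Rightarrow> nat \<Rightarrow> 'a::euclidean_space" where
  "aoa f g \<Omega> D G x0 t = aoa_hist f g \<Omega> D G x0 t ! (t - 1)"

definition c_prime :: "nat \<Rightarrow> real" where
  "c_prime s = 1 + ln (real s) + ln (1 + log 2 (real s)) + ln ((5 + 3 * ln (1 + real s)) / 2)"

definition path_length :: "(nat \<Rightarrow> 'a::real_normed_vector) \<Rightarrow> nat \<Rightarrow> nat \<Rightarrow> real" where
  "path_length u r s = (\<Sum>t = r..s. norm (u (t + 1) - u t))"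

definition k_I :: "real \<Rightarrow> real \<Rightarrow> int" where
  "k_I P D = \<lfloor>log 2 (1 + 4 * P / (7 * D)) / 2\<rfloor> + 1"

end

theory Submission
  imports Defs
begin


lemma anh_Q:
  fixes x y l :: real
  assumes "y \<ge> 0" "l \<ge> 0" "y = 0 \<Longrightarrow> x \<le> 0"
  shows "2*l*x - l^2*y \<le> (max x 0)^2 / y"
proof (cases "y = 0")
  case True
  then show ?thesis using assms by (simp add: mult_nonneg_nonpos)
next
  case False
  then have yp: "y > 0" using assms by simp
  define m where "m = max x 0"
  have "(max x 0)^2/y - (2*l*x - l^2*y) = (m - l*y)^2/y + 2*l*(m - x)"
    using yp unfolding m_def by (simp add: field_simps power2_eq_square)
  moreover have "(m - l*y)^2/y \<ge> 0" using yp by simp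
  moreover have "2*l*(m - x) \<ge> 0" using assms(2) unfolding m_def by simp
  ultimately show ?thesis by linarith
qed

lemma anh_chord:
  fixes x0 y0 x1 y1 \<rho> :: real
  assumes "0 \<le> \<rho>" "\<rho> \<le> 1" "y0 \<ge> 0" "y1 > 0" "y0 = 0 \<Longrightarrow> x0 \<le> 0"
  shows "anh_Phi ((1-\<rho>)*x0 + \<rho>*x1) ((1-\<rho>)*y0 + \<rho>*y1) \<le> (1-\<rho>)*anh_Phi x0 y0 + \<rho>*anh_Phi x1 y1"
proof (cases "\<rho> = 0")
  case True
  then show ?thesis by simp
next
  case False
  define x where "x = (1-\<rho>)*x0 + \<rho>*x1"
  define y where "y = (1-\<rho>)*y0 + \<rho>*y1"
  have yp: "y > 0" unfolding y_def using assms False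
    by (smt (verit) mult_nonneg_nonneg mult_pos_pos)
  define l where "l = max x 0 / y"
  have l0: "l \<ge> 0" unfolding l_def using yp by simp
  have eq: "(max x 0)^2 / y = 2*l*x - l^2*y"
    unfolding l_def using yp by (cases "x \<ge> 0") (auto simp: field_simps power2_eq_square)
  also have "\<dots> = (1-\<rho>)*(2*l*x0 - l^2*y0) + \<rho>*(2*l*x1 - l^2*y1)"
    unfolding x_def y_def by (simp add: algebra_simps)
  also have "\<dots> \<le> (1-\<rho>)*((max x0 0)^2/y0) + \<rho>*((max x1 0)^2/y1)"
    using assms anh_Q[of y0 l x0] anh_Q[of y1 l x1] l0
    by (intro add_mono mult_left_mono) auto
  finally have le: "(max x 0)^2 / y \<le> (1-\<rho>)*((max x0 0)^2/y0) + \<rho>*((max x1 0)^2/y1)" .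
  have "anh_Phi x y = exp (((max x 0)^2 / y)/3)" unfolding anh_Phi_def by (simp add: field_simps)
  also have "\<dots> \<le> exp (((1-\<rho>)*((max x0 0)^2/y0) + \<rho>*((max x1 0)^2/y1))/3)"
    using le by simp
  also have "\<dots> = exp ((1-\<rho>)*((max x0 0)^2/y0/3) + \<rho>*((max x1 0)^2/y1/3))"
  proof -
    define A where "A = (max x0 0)^2/y0"
    define B where "B = (max x1 0)^2/y1"
    have "((1-\<rho>)*A + \<rho>*B)/3 = (1-\<rho>)*(A/3) + \<rho>*(B/3)" by (simp add: field_simps)
    then show ?thesis unfolding A_def B_def by simp
  qed
  also have "\<dots> \<le> (1-\<rho>)*exp ((max x0 0)^2/y0/3) + \<rho>*exp ((max x1 0)^2/y1/3)"
    using convex_onD[OF exp_convex, of \<rho> "(max x0 0)^2/y0/3" "(max x1 0)^2/y1/3"] assms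
    by simp
  also have "\<dots> = (1-\<rho>)*anh_Phi x0 y0 + \<rho>*anh_Phi x1 y1"
    unfolding anh_Phi_def by (simp add: field_simps)
  finally show ?thesis unfolding x_def y_def .
qed

lemma exp_le_inv_one_minus:
  fixes a :: real assumes "a < 1" shows "exp a \<le> 1/(1-a)"
proof -
  have "1 - a \<le> exp (-a)" by (rule exp_minus_ge)
  then have "(1-a) * exp a \<le> 1" using assms by (simp add: exp_minus field_simps)
  then show ?thesis using assms by (simp add: field_simps)
qed

lemma exp_9_7: "exp (9/7::real) \<le> 4"
proof -
  have "exp (9/7::real) = exp 1 * exp (2/7)" by (simp flip: exp_add)
  also have "\<dots> \<le> (272/100) * (1/(1-2/7))"
    using e_less_272 exp_le_inv_one_minus[of "2/7"]
    by (intro mult_mono) auto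
  also have "\<dots> \<le> 4" by simp
  finally show ?thesis .
qed

lemma cosh_bound:
  fixes u :: real assumes "0 \<le> u" "u \<le> 2/3"
  shows "exp u + exp (-u) \<le> 2 + (10/9)*u^2"
proof -
  obtain t1 where t1: "\<bar>t1\<bar> \<le> \<bar>u\<bar>" "exp u = (\<Sum>m<4. u^m / fact m) + (exp t1 / fact 4) * u^4"
    using Maclaurin_exp_le[of u 4] by blast
  obtain t2 where t2: "\<bar>t2\<bar> \<le> \<bar>-u\<bar>" "exp (-u) = (\<Sum>m<4. (-u)^m / fact m) + (exp t2 / fact 4) * (-u)^4"
    using Maclaurin_exp_le[of "-u" 4] by blast
  have "exp t1 \<le> exp 1" using t1(1) assms by simp
  then have e1: "exp t1 \<le> 3" using e_less_272 by linarith
  have "exp t2 \<le> exp 1" using t2(1) assms by simp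
  then have e2: "exp t2 \<le> 3" using e_less_272 by linarith
  have s: "(\<Sum>m<4. u^m / fact m) + (\<Sum>m<4. (-u)^m / fact m) = 2 + u^2"
    by (simp add: numeral_eq_Suc fact_numeral)
  have f4: "(fact 4::real) = 24" by (simp add: fact_numeral)
  have "exp u + exp (-u) = 2 + u^2 + (exp t1 + exp t2) / 24 * u^4"
    using t1(2) t2(2) s f4 by (simp add: field_simps)
  also have "\<dots> \<le> 2 + u^2 + 6/24 * u^4"
    using e1 e2 by (intro add_left_mono mult_right_mono) auto
  also have "\<dots> \<le> 2 + (10/9)*u^2"
  proof -
    have "u^4 \<le> (4/9) * u^2"
    proof -
      have "u^2 \<le> (2/3)^2" using assms by (intro power_mono) auto
      then have "u^2 * u^2 \<le> (4/9) * u^2" by (intro mult_right_mono) (auto simp: power2_eq_square)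
      then show ?thesis by (simp add: power2_eq_square power4_eq_xxxx)
    qed
    then show ?thesis by simp
  qed
  finally show ?thesis .
qed



lemma anh_second_diff:
  fixes R C :: real
  assumes C0: "C \<ge> 0" and RC: "\<bar>R\<bar> \<le> C"
  shows "(anh_Phi (R+1) (C+1) + anh_Phi (R-1) (C+1))/2 - anh_Phi R C \<le> 2/(C+1)"
proof -
  define a where "a = 1/(3*(C+1))"
  have a0: "a > 0" "a \<le> 1/3" unfolding a_def using C0 by (auto simp: field_simps)
  have ea: "exp a - 1 \<le> 3/2 * a"
  proof -
    have "exp a \<le> 1/(1-a)" using a0 by (intro exp_le_inv_one_minus) auto
    moreover have "1/(1-a) - 1 \<le> 3/2*a" using a0 by (simp add: field_simps)
    ultimately show ?thesis by linarith
  qed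
  have a6: "6*a = 2/(C+1)" unfolding a_def using C0 by (simp add: field_simps)
  show ?thesis
  proof (cases "R \<le> 0")
    case True
    have p0: "anh_Phi R C = 1" using True by (simp add: anh_Phi_def)
    have p1: "anh_Phi (R-1) (C+1) = 1" using True by (simp add: anh_Phi_def)
    have m: "(max (R+1) 0)^2 \<le> 1"
      using True RC by (intro power_le_one) auto
    have "anh_Phi (R+1) (C+1) \<le> exp a"
      unfolding anh_Phi_def a_def using m C0 by (simp add: divide_right_mono)
    then have "(anh_Phi (R+1) (C+1) + anh_Phi (R-1) (C+1))/2 - anh_Phi R C \<le> (exp a - 1)/2"
      using p0 p1 by simp
    also have "\<dots> \<le> 6*a" using ea a0 by simp
    finally show ?thesis using a6 by simp
  next
    case False
    then have Rp: "R > 0" by simp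
    then have Cp: "C > 0" using RC by simp
    define E where "E = exp (R^2/(3*C))"
    define b where "b = R^2/(3*C*(C+1))"
    define u where "u = 2*a*R"
    define Y where "Y = R^2/(3*C) - b + a"
    have b0: "b \<ge> 0" unfolding b_def using Cp by simp
    have u0: "0 \<le> u" "u \<le> 2/3" unfolding u_def a_def using Rp RC Cp by (auto simp: field_simps)
    have c1: "C + 1 \<noteq> 0" "C \<noteq> 0" using Cp by auto
    have Yeq: "Y = (R^2 + 1)/(3*(C+1))" unfolding Y_def b_def a_def using c1
      by (simp add: divide_simps) (simp add: algebra_simps power2_eq_square)
    have ueq: "u = 2*R/(3*(C+1))" unfolding u_def a_def by simp
    have eqp: "(R+1)^2/(3*(C+1)) = Y + u" unfolding Yeq ueq
      by (simp add: add_divide_distrib[symmetric] power2_eq_square algebra_simps)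
    have eqm: "(R-1)^2/(3*(C+1)) = Y - u" unfolding Yeq ueq
      by (simp add: diff_divide_distrib[symmetric] power2_eq_square algebra_simps)
    have P1: "anh_Phi (R+1) (C+1) = exp (Y + u)"
      unfolding anh_Phi_def using Rp eqp by (simp add: max_def)
    have P2: "anh_Phi (R-1) (C+1) \<le> exp (Y - u)"
    proof -
      have "(max (R-1) 0)^2 \<le> (R-1)^2" by (cases "R - 1 \<ge> 0") (auto simp: max_def)
      then have "(max (R-1) 0)^2/(3*(C+1)) \<le> (R-1)^2/(3*(C+1))"
        using C0 by (intro divide_right_mono) auto
      then show ?thesis unfolding anh_Phi_def using eqm by simp
    qed
    have P0: "anh_Phi R C = E" unfolding anh_Phi_def E_def using Rp by (simp add: max_def)
    have "exp (Y+u) + exp (Y-u) = exp Y * (exp u + exp (-u))"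
      by (simp add: exp_add exp_diff exp_minus field_simps)
    also have "\<dots> \<le> exp Y * (2 + (10/9)*u^2)"
      using cosh_bound[OF u0] by simp
    also have "\<dots> \<le> exp Y * (2 * exp ((5/9)*u^2))"
    proof -
      have "1 + (5/9)*u^2 \<le> exp ((5/9)*u^2)" by (rule exp_ge_add_one_self)
      then have "2 + (10/9)*u^2 \<le> 2 * exp ((5/9)*u^2)" by linarith
      then show ?thesis by (intro mult_left_mono) auto
    qed
    finally have avg: "(exp (Y+u) + exp (Y-u))/2 \<le> exp (Y + (5/9)*u^2)"
      by (simp add: exp_add)
    have uu: "(5/9)*u^2 \<le> (20/27)*b"
    proof -
      have "(5/9)*u^2 = (20/81) * R^2 / (C+1)^2"
        unfolding u_def a_def using C0 by (simp add: field_simps power2_eq_square)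
      also have "\<dots> \<le> (20/81) * R^2 / (C*(C+1))"
        using Cp by (intro divide_left_mono) (auto simp: power2_eq_square)
      also have "\<dots> = (20/27)*b" unfolding b_def using c1 by simp
      finally show ?thesis .
    qed
    have "Y + (5/9)*u^2 \<le> R^2/(3*C) + (a - (7/27)*b)"
      using uu unfolding Y_def by simp
    then have avg2: "(exp (Y+u) + exp (Y-u))/2 \<le> E * exp (a - (7/27)*b)"
    proof -
      have "exp (Y + (5/9)*u^2) \<le> exp (R^2/(3*C) + (a - (7/27)*b))"
        using \<open>Y + (5/9)*u^2 \<le> R^2/(3*C) + (a - (7/27)*b)\<close> by simp
      also have "\<dots> = E * exp (a - (7/27)*b)" unfolding E_def by (simp add: exp_add)
      finally show ?thesis using avg by linarith
    qed
    have L: "(anh_Phi (R+1) (C+1) + anh_Phi (R-1) (C+1))/2 - anh_Phi R C \<le> E * (exp (a - (7/27)*b) - 1)"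
      using P1 P2 P0 avg2 by (simp add: algebra_simps)
    show ?thesis
    proof (cases "(7/27)*b \<ge> a")
      case True
      then have "exp (a - (7/27)*b) \<le> 1" by simp
      then have "E * (exp (a - (7/27)*b) - 1) \<le> 0"
        unfolding E_def by (simp add: mult_nonneg_nonpos)
      moreover have "2/(C+1) \<ge> 0" using C0 by simp
      ultimately show ?thesis using L by linarith
    next
      case False
      then have "b < (27/7)*a" by simp
      then have "R^2/(3*C) \<le> 9/7"
      proof -
        have "R^2/(3*C) = b*(C+1)" unfolding b_def using c1 by simp
        also have "\<dots> \<le> (27/7)*a*(C+1)" using \<open>b < (27/7)*a\<close> C0 by (intro mult_right_mono) auto
        also have "\<dots> = 9/7" unfolding a_def using C0 by (simp add: field_simps)
        finally show ?thesis .
      qed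
      then have "E \<le> exp (9/7)" unfolding E_def by simp
      then have E4: "E \<le> 4" using exp_9_7 by linarith
      have "exp (a - (7/27)*b) - 1 \<le> exp a - 1" using b0 by simp
      also have "\<dots> \<le> 3/2*a" by (rule ea)
      finally have ee: "exp (a - (7/27)*b) - 1 \<le> 3/2*a" .
      have "E * (exp (a - (7/27)*b) - 1) \<le> E * (3/2*a)"
        using ee unfolding E_def by (intro mult_left_mono) auto
      also have "\<dots> \<le> 4 * (3/2*a)" using E4 a0 by (intro mult_right_mono) auto
      finally have "E * (exp (a - (7/27)*b) - 1) \<le> 4 * (3/2*a)" .
      then show ?thesis using L a6 by simp
    qed
  qed
qed

lemma anh_potential:
  fixes R C r :: real
  assumes C0: "C \<ge> 0" and RC: "\<bar>R\<bar> \<le> C" and r1: "\<bar>r\<bar> \<le> 1"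
  shows "anh_Phi (R+r) (C+\<bar>r\<bar>) \<le> anh_Phi R C + anh_w R C * r + 2*\<bar>r\<bar>/(C+1)"
proof -
  have F: "(anh_Phi (R+1) (C+1) + anh_Phi (R-1) (C+1))/2 - anh_Phi R C \<le> 2/(C+1)"
    by (rule anh_second_diff[OF C0 RC])
  have c0: "C = 0 \<Longrightarrow> R \<le> 0" using RC by simp
  show ?thesis
  proof (cases "r \<ge> 0")
    case True
    have "anh_Phi (R+r) (C+\<bar>r\<bar>) = anh_Phi ((1-r)*R + r*(R+1)) ((1-r)*C + r*(C+1))"
      using True by (simp add: algebra_simps)
    also have "\<dots> \<le> (1-r)*anh_Phi R C + r*anh_Phi (R+1) (C+1)"
      using True r1 C0 c0 by (intro anh_chord) auto
    also have "\<dots> = anh_Phi R C + r*(anh_Phi (R+1) (C+1) - anh_Phi R C)"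
      by (simp add: algebra_simps)
    also have "\<dots> \<le> anh_Phi R C + r*(anh_w R C + 2/(C+1))"
    proof -
      have "anh_Phi (R+1) (C+1) - anh_Phi R C \<le> anh_w R C + 2/(C+1)"
        using F unfolding anh_w_def by argo
      then show ?thesis using True by (intro add_left_mono mult_left_mono) auto
    qed
    finally show ?thesis using True by (simp add: algebra_simps)
  next
    case False
    define q where "q = -r"
    have q: "q \<ge> 0" "q \<le> 1" "r = -q" using False r1 unfolding q_def by auto
    have "anh_Phi (R+r) (C+\<bar>r\<bar>) = anh_Phi ((1-q)*R + q*(R-1)) ((1-q)*C + q*(C+1))"
      using q by (simp add: algebra_simps)
    also have "\<dots> \<le> (1-q)*anh_Phi R C + q*anh_Phi (R-1) (C+1)"
      using q C0 c0 by (intro anh_chord) auto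
    also have "\<dots> = anh_Phi R C + q*(anh_Phi (R-1) (C+1) - anh_Phi R C)"
      by (simp add: algebra_simps)
    also have "\<dots> \<le> anh_Phi R C + q*(- anh_w R C + 2/(C+1))"
    proof -
      have "anh_Phi (R-1) (C+1) - anh_Phi R C \<le> - anh_w R C + 2/(C+1)"
        using F unfolding anh_w_def by argo
      then show ?thesis using q by (intro add_left_mono mult_left_mono) auto
    qed
    finally show ?thesis using q by (simp add: algebra_simps)
  qed
qed

lemma anh_w_nonneg: "C \<ge> 0 \<Longrightarrow> anh_w R C \<ge> 0"
proof -
  assume C0: "C \<ge> 0"
  have "(max (R-1) 0)^2 \<le> (max (R+1) 0)^2" by (intro power_mono) auto
  then have "(max (R-1) 0)^2/(3*(C+1)) \<le> (max (R+1) 0)^2/(3*(C+1))"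
    using C0 by (intro divide_right_mono) auto
  then show ?thesis unfolding anh_w_def anh_Phi_def by simp
qed



lemma convex_tangent:
  fixes F :: "'a::real_inner \<Rightarrow> real"
  assumes S: "convex S" and cvx: "convex_on S F"
    and der: "(F has_derivative (\<lambda>h. gx \<bullet> h)) (at x within S)"
    and x: "x \<in> S" and v: "v \<in> S"
  shows "F x + gx \<bullet> (v - x) \<le> F v"
proof -
  define \<gamma> where "\<gamma> = (\<lambda>t::real. x + t *\<^sub>R (v - x))"
  have g0: "\<gamma> 0 = x" unfolding \<gamma>_def by simp
  have gS: "\<gamma> ` {0..1} \<subseteq> S"
  proof
    fix y assume "y \<in> \<gamma> ` {0..1}"
    then obtain t where t: "t \<in> {0..1}" "y = \<gamma> t" by auto
    have "y = (1 - t) *\<^sub>R x + t *\<^sub>R v" unfolding t \<gamma>_def by (simp add: algebra_simps)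
    then show "y \<in> S" using S x v t by (simp add: convexD_alt)
  qed
  have d\<gamma>: "(\<gamma> has_derivative (\<lambda>t. t *\<^sub>R (v - x))) (at 0 within {0..1})"
    unfolding \<gamma>_def by (auto intro!: derivative_eq_intros)
  have dF: "(F has_derivative (\<lambda>h. gx \<bullet> h)) (at (\<gamma> 0) within (\<gamma> ` {0..1}))"
    using has_derivative_subset[OF der gS] g0 by simp
  have "((\<lambda>t. F (\<gamma> t)) has_derivative (\<lambda>t. gx \<bullet> (t *\<^sub>R (v - x)))) (at 0 within {0..1})"
    by (rule has_derivative_in_compose[OF d\<gamma> dF])
  then have "((\<lambda>t. F (\<gamma> t)) has_derivative (\<lambda>t. (gx \<bullet> (v - x)) * t)) (at 0 within {0..1})"
    by (rule has_derivative_eq_rhs) (auto simp: fun_eq_iff)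
  then have "((\<lambda>t. F (\<gamma> t)) has_field_derivative (gx \<bullet> (v - x))) (at 0 within {0..1})"
    unfolding has_field_derivative_def by simp
  then have lim: "((\<lambda>y. (F (\<gamma> y) - F (\<gamma> 0)) / (y - 0)) \<longlongrightarrow> gx \<bullet> (v - x)) (at 0 within {0..1})"
    by (simp add: has_field_derivative_iff)
  have ev: "eventually (\<lambda>y. (F (\<gamma> y) - F (\<gamma> 0)) / (y - 0) \<le> F v - F x) (at 0 within {0..1::real})"
    unfolding eventually_at_filter
  proof (rule always_eventually, intro allI impI)
    fix y :: real assume y: "y \<noteq> 0" "y \<in> {0..1}"
    then have yp: "y > 0" by auto
    have "F (\<gamma> y) = F ((1 - y) *\<^sub>R x + y *\<^sub>R v)" unfolding \<gamma>_def by (simp add: algebra_simps)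
    also have "\<dots> \<le> (1 - y) * F x + y * F v" using convex_onD[OF cvx, of y x v] y x v by auto
    finally have "F (\<gamma> y) - F (\<gamma> 0) \<le> y * (F v - F x)" using g0 by (simp add: algebra_simps)
    then show "(F (\<gamma> y) - F (\<gamma> 0)) / (y - 0) \<le> F v - F x" using yp by (simp add: field_simps)
  qed
  have nt: "\<not> trivial_limit (at (0::real) within {0..1})"
    by (simp add: at_within_Icc_at_right)
  have "gx \<bullet> (v - x) \<le> F v - F x" by (rule tendsto_upperbound[OF lim ev nt])
  then show ?thesis by simp
qed

lemma ln_one_plus_lower:
  fixes y :: real assumes "0 \<le> y" "y \<le> 1"
  shows "y \<le> 2 * ln (1 + y)"
proof -
  have "ln (1/(1+y)) \<le> 1/(1+y) - 1" using assms by (intro ln_le_minus_one) auto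
  then have "- ln (1+y) \<le> - y/(1+y)" using assms by (simp add: ln_div field_simps)
  then have h1: "y/(1+y) \<le> ln (1+y)" by simp
  have h2: "y/2 \<le> y/(1+y)" using assms by (intro divide_left_mono) auto
  from h1 h2 show ?thesis by linarith
qed

lemma logsum:
  fixes x :: "nat \<Rightarrow> real"
  assumes "\<And>k. 0 \<le> x k" "\<And>k. x k \<le> 1"
  shows "(\<Sum>k<n. x k / (1 + (\<Sum>j<k. x j))) \<le> 2 * ln (1 + (\<Sum>k<n. x k))"
proof (induction n)
  case 0
  then show ?case by simp
next
  case (Suc n)
  define c where "c = (\<Sum>j<n. x j)"
  have c0: "c \<ge> 0" unfolding c_def using assms by (simp add: sum_nonneg)
  have y: "0 \<le> x n / (1 + c)" "x n / (1 + c) \<le> 1" using assms[of n] c0 by auto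
  have "x n / (1 + c) \<le> 2 * ln (1 + x n / (1 + c))" by (rule ln_one_plus_lower[OF y])
  also have "1 + x n / (1 + c) = (1 + (c + x n)) / (1 + c)" using c0 by (simp add: field_simps)
  also have "ln \<dots> = ln (1 + (c + x n)) - ln (1 + c)" using c0 assms[of n] by (simp add: ln_div)
  finally have step: "x n / (1 + c) \<le> 2 * ln (1 + (c + x n)) - 2 * ln (1 + c)" by simp
  show ?case using Suc.IH step unfolding c_def by simp
qed



lemma ogd_in:
  assumes "closed \<Omega>" "x0 \<in> \<Omega>"
  shows "ogd g \<Omega> \<eta> a x0 k \<in> \<Omega>"
proof (cases k)
  case 0 then show ?thesis using assms by simp
next
  case (Suc m) then show ?thesis using assms closest_point_in_set[of \<Omega>] by auto
qed

lemma norm_sq_sub_scale: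
  fixes w gk :: "'a::real_inner"
  shows "(norm (w - \<eta> *\<^sub>R gk))^2 = (norm w)^2 - 2*\<eta>*(gk \<bullet> w) + \<eta>^2 * (norm gk)^2"
  unfolding power2_norm_eq_inner
  by (simp add: inner_diff_left inner_diff_right inner_commute algebra_simps power2_eq_square)

lemma proj_nonexp:
  fixes \<Omega> :: "'a::euclidean_space set"
  assumes "convex \<Omega>" "closed \<Omega>" "z \<in> \<Omega>"
  shows "norm (closest_point \<Omega> y - z) \<le> norm (y - z)"
proof -
  have "dist (closest_point \<Omega> y) (closest_point \<Omega> z) \<le> dist y z"
    using assms by (intro closest_point_lipschitz) auto
  then show ?thesis using closest_point_self[OF assms(3)] by (simp add: dist_norm)
qed

lemma sq_diff_le:
  fixes p z z' :: "'a::real_normed_vector"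
  assumes "norm (p - z') \<le> D" "norm (p - z) \<le> D"
  shows "(norm (p - z'))^2 - (norm (p - z))^2 \<le> 2*D*norm (z' - z)"
proof -
  define A where "A = norm (p - z')"
  define B where "B = norm (p - z)"
  have AB: "A - B \<le> norm (z' - z)" unfolding A_def B_def
    by (metis norm_triangle_ineq2 diff_diff_eq2 norm_minus_commute diff_add_cancel
        add_diff_cancel_left' order_trans norm_triangle_ineq4 dual_order.refl
        cancel_comm_monoid_add_class.diff_cancel)
  have s: "A + B \<ge> 0" "A + B \<le> 2*D" using assms unfolding A_def B_def by auto
  have "A^2 - B^2 = (A - B)*(A + B)" by (simp add: power2_eq_square algebra_simps)
  also have "\<dots> \<le> norm (z' - z) * (A + B)" using AB s by (intro mult_right_mono) auto
  also have "\<dots> \<le> norm (z' - z) * (2*D)" using s by (intro mult_left_mono) auto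
  finally show ?thesis unfolding A_def B_def by (simp add: algebra_simps)
qed



locale oco =
  fixes \<Omega> :: "'a::euclidean_space set"
    and f :: "nat \<Rightarrow> 'a \<Rightarrow> real" and g :: "nat \<Rightarrow> 'a \<Rightarrow> 'a"
    and D G :: real
    and x0 :: "nat set \<Rightarrow> nat \<Rightarrow> 'a"
  assumes cvx: "convex \<Omega>" and cl: "closed \<Omega>"
    and zero_in: "0 \<in> \<Omega>" and diam: "\<forall>x\<in>\<Omega>. \<forall>y\<in>\<Omega>. norm (x - y) \<le> D"
    and Dp: "D > 0" and Gp: "G > 0"
    and fcvx: "\<forall>t\<ge>1. convex_on \<Omega> (f t)"
    and der: "\<forall>t\<ge>1. \<forall>w\<in>\<Omega>. (f t has_derivative (\<lambda>h. g t w \<bullet> h)) (at w within \<Omega>)"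
    and gb: "\<forall>t\<ge>1. \<forall>w\<in>\<Omega>. norm (g t w) \<le> G"
    and fb: "\<forall>t\<ge>1. \<forall>w\<in>\<Omega>. 0 \<le> f t w \<and> f t w \<le> 1"
    and x0in: "\<forall>J\<in>geo_intervals. \<forall>i\<ge>1. x0 J i \<in> \<Omega>"
begin

lemma ne: "\<Omega> \<noteq> {}" using zero_in by auto

lemma ogd_step:
  assumes t1: "t \<ge> 1" and eta: "\<eta> > 0" and y: "y \<in> \<Omega>" and z: "z \<in> \<Omega>" and z': "z' \<in> \<Omega>"
  shows "f t y - f t z \<le> ((norm (y - z))^2 - (norm (closest_point \<Omega> (y - \<eta> *\<^sub>R g t y) - z'))^2
            + 2*D*norm (z' - z))/(2*\<eta>) + \<eta>*G^2/2"
proof -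
  define gk where "gk = g t y"
  define y' where "y' = closest_point \<Omega> (y - \<eta> *\<^sub>R gk)"
  have y'in: "y' \<in> \<Omega>" unfolding y'_def using closest_point_in_set[OF cl ne] .
  have tan: "f t y + gk \<bullet> (z - y) \<le> f t z" unfolding gk_def
    using convex_tangent[OF cvx _ _ y z] fcvx der t1 y by auto
  have "norm (y' - z) \<le> norm (y - \<eta> *\<^sub>R gk - z)" unfolding y'_def
    by (rule proj_nonexp[OF cvx cl z])
  then have "(norm (y' - z))^2 \<le> (norm (y - \<eta> *\<^sub>R gk - z))^2" by (intro power_mono) auto
  also have "y - \<eta> *\<^sub>R gk - z = (y - z) - \<eta> *\<^sub>R gk" by (simp add: algebra_simps)
  also have "(norm \<dots>)^2 = (norm (y - z))^2 - 2*\<eta>*(gk \<bullet> (y - z)) + \<eta>^2*(norm gk)^2"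
    by (rule norm_sq_sub_scale)
  finally have A: "2*\<eta>*(gk \<bullet> (y - z)) \<le> (norm (y - z))^2 - (norm (y' - z))^2 + \<eta>^2*(norm gk)^2"
    by simp
  have gG: "(norm gk)^2 \<le> G^2" unfolding gk_def using gb t1 y by (intro power_mono) auto
  have B: "(norm (y' - z'))^2 - (norm (y' - z))^2 \<le> 2*D*norm (z' - z)"
    using diam y'in z z' by (intro sq_diff_le) auto
  have "2*\<eta>*(f t y - f t z) \<le> 2*\<eta>*(gk \<bullet> (y - z))"
  proof -
    have "gk \<bullet> (z - y) = - (gk \<bullet> (y - z))" by (simp add: inner_diff_right)
    then have "f t y - f t z \<le> gk \<bullet> (y - z)" using tan by linarith
    then show ?thesis using eta by simp
  qed
  also have "\<dots> \<le> (norm (y - z))^2 - (norm (y' - z'))^2 + 2*D*norm (z' - z) + \<eta>^2*G^2"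
    using A B gG eta by (smt (verit) mult_left_mono zero_le_power2)
  finally have "2*\<eta>*(f t y - f t z) \<le> (norm (y - z))^2 - (norm (y' - z'))^2 + 2*D*norm (z' - z) + \<eta>^2*G^2" .
  then have "f t y - f t z \<le> ((norm (y - z))^2 - (norm (y' - z'))^2 + 2*D*norm (z' - z) + \<eta>^2*G^2)/(2*\<eta>)"
    using eta by (simp add: field_simps)
  also have "\<dots> = ((norm (y - z))^2 - (norm (y' - z'))^2 + 2*D*norm (z' - z))/(2*\<eta>) + \<eta>*G^2/2"
    using eta by (simp add: field_simps power2_eq_square)
  finally show ?thesis unfolding y'_def gk_def .
qed

lemma ogd_regret:
  assumes a1: "a \<ge> 1" and eta: "\<eta> > 0" and y0: "y0 \<in> \<Omega>" and uin: "\<forall>k\<le>L. u (a+k) \<in> \<Omega>"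
  shows "(\<Sum>k<L. f (a+k) (ogd g \<Omega> \<eta> a y0 k) - f (a+k) (u (a+k)))
     \<le> (D^2 + 2*D*(\<Sum>k<L. norm (u (a+k+1) - u (a+k))))/(2*\<eta>) + \<eta>*G^2*L/2"
proof -
  define x where "x = ogd g \<Omega> \<eta> a y0"
  have xin: "\<And>k. x k \<in> \<Omega>" unfolding x_def using ogd_in[OF cl y0] .
  define \<phi> where "\<phi> = (\<lambda>k. (norm (x k - u (a+k)))^2)"
  have step: "f (a+k) (x k) - f (a+k) (u (a+k)) \<le> (\<phi> k - \<phi> (Suc k) + 2*D*norm (u (a+k+1) - u (a+k)))/(2*\<eta>) + \<eta>*G^2/2"
    if "k < L" for k
  proof -
    have "x (Suc k) = closest_point \<Omega> (x k - \<eta> *\<^sub>R g (a+k) (x k))" unfolding x_def by simp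
    moreover have "u (a + (k+1)) \<in> \<Omega>" using uin[rule_format, of "k+1"] that by linarith
    ultimately show ?thesis unfolding \<phi>_def
      using ogd_step[of "a+k" \<eta> "x k" "u (a+k)" "u (a+k+1)"] a1 eta xin uin that
      by (auto simp: add.assoc)
  qed
  have "(\<Sum>k<L. f (a+k) (x k) - f (a+k) (u (a+k)))
      \<le> (\<Sum>k<L. (\<phi> k - \<phi> (Suc k) + 2*D*norm (u (a+k+1) - u (a+k)))/(2*\<eta>) + \<eta>*G^2/2)"
    using step by (intro sum_mono) auto
  also have "\<dots> = ((\<Sum>k<L. \<phi> k - \<phi> (Suc k)) + 2*D*(\<Sum>k<L. norm (u (a+k+1) - u (a+k))))/(2*\<eta>) + \<eta>*G^2*L/2"
    by (simp add: sum.distrib sum_divide_distrib[symmetric] sum_distrib_left)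
  also have "(\<Sum>k<L. \<phi> k - \<phi> (Suc k)) = \<phi> 0 - \<phi> L"
    using sum_lessThan_telescope'[of \<phi> L] by simp
  also have "\<phi> 0 - \<phi> L \<le> D^2"
  proof -
    have "norm (x 0 - u a) \<le> D" using diam xin uin by auto
    then have "\<phi> 0 \<le> D^2" unfolding \<phi>_def by (intro power_mono) auto
    moreover have "\<phi> L \<ge> 0" unfolding \<phi>_def by simp
    ultimately show ?thesis by linarith
  qed
  finally have "(\<Sum>k<L. f (a+k) (x k) - f (a+k) (u (a+k)))
      \<le> (D^2 + 2*D*(\<Sum>k<L. norm (u (a+k+1) - u (a+k))))/(2*\<eta>) + \<eta>*G^2*L/2"
    using eta by (simp add: divide_right_mono)
  then show ?thesis unfolding x_def .
qed

end


lemma sum_inv_prod: "(\<Sum>i=1..n. 1/(real i * (real i + 1))) = real n / (real n + 1)"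
proof (induction n)
  case 0 then show ?case by simp
next
  case (Suc n)
  have "(\<Sum>i=1..Suc n. 1/(real i * (real i + 1))) = real n/(real n + 1) + 1/((real n + 1)*(real n + 2))"
    using Suc by (simp add: add.commute)
  also have "\<dots> = (real n + 1)/(real n + 2)"
  proof -
    have h: "real n + 1 \<noteq> 0" "real n + 2 \<noteq> 0" by linarith+
    show ?thesis using h by (simp add: divide_simps) (simp add: algebra_simps power2_eq_square)
  qed
  finally show ?case by (simp add: add.commute)
qed

lemma ader_N_pos: "ader_N L \<ge> 1" unfolding ader_N_def by simp

lemma ader_p1_sum: "(\<Sum>i=1..ader_N L. ader_p1 L i) = 1"
proof -
  define N where "N = ader_N L"
  have N1: "N \<ge> 1" unfolding N_def by (rule ader_N_pos)
  have "(\<Sum>i=1..N. ader_p1 L i) = (1 + 1/real N) * (\<Sum>i=1..N. 1/(real i * (real i + 1)))"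
    unfolding ader_p1_def N_def by (simp add: sum_distrib_left)
  also have "\<dots> = 1"
  proof -
    have "real N > 0" using N1 by simp
    then have "real N \<noteq> 0" "real N + 1 \<noteq> 0" by auto
    then show ?thesis by (simp only: sum_inv_prod) (simp add: divide_simps)
  qed
  finally show ?thesis unfolding N_def .
qed

lemma ader_p1_pos: "i \<ge> 1 \<Longrightarrow> ader_p1 L i > 0"
  unfolding ader_p1_def by (intro divide_pos_pos add_pos_nonneg mult_pos_pos) auto

lemma exp_neg_upper: "0 \<le> x \<Longrightarrow> exp (-x) \<le> 1 - x + x^2/2" for x :: real
proof -
  assume x: "0 \<le> x"
  have e: "1 + x + x^2/2 \<le> exp x" by (rule exp_lower_Taylor_quadratic[OF x])
  have pos: "1 + x + x^2/2 > 0" using x by (simp add: add_pos_nonneg)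
  have "(1 - x + x^2/2) * (1 + x + x^2/2) = 1 + x^4/4"
    by (simp add: algebra_simps power2_eq_square power4_eq_xxxx)
  also have "\<dots> \<ge> 1" by simp
  finally have "1 \<le> (1 - x + x^2/2) * (1 + x + x^2/2)" .
  then have "1/(1 + x + x^2/2) \<le> 1 - x + x^2/2" using pos by (simp add: field_simps)
  moreover have "exp (-x) \<le> 1/(1 + x + x^2/2)" using e pos by (simp add: exp_minus field_simps)
  ultimately show ?thesis by linarith
qed

context oco begin

lemma ader_expert_in: "(\<forall>i\<ge>1. y0 i \<in> \<Omega>) \<Longrightarrow> i \<ge> 1 \<Longrightarrow> ader_expert g \<Omega> D G L a y0 i k \<in> \<Omega>"
  unfolding ader_expert_def using ogd_in[OF cl] by auto

lemma ader_weight_props: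
  "(\<forall>i\<in>{1..ader_N L}. ader_weight f g \<Omega> D G L a y0 k i > 0) \<and> (\<Sum>i=1..ader_N L. ader_weight f g \<Omega> D G L a y0 k i) = 1"
proof (induction k)
  case 0
  then show ?case using ader_p1_sum ader_p1_pos by auto
next
  case (Suc k)
  define w where "w = ader_weight f g \<Omega> D G L a y0 k"
  define e where "e = (\<lambda>i. exp (- ader_alpha L * f (a + k) (ader_expert g \<Omega> D G L a y0 i k)))"
  define Z where "Z = (\<Sum>j = 1..ader_N L. w j * e j)"
  have wp: "\<forall>i\<in>{1..ader_N L}. w i > 0" using Suc unfolding w_def by auto
  have Zp: "Z > 0" unfolding Z_def using wp ader_N_pos[of L] unfolding e_def
    by (intro sum_pos) auto
  have eq: "\<And>i. ader_weight f g \<Omega> D G L a y0 (Suc k) i = w i * e i / Z"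
    unfolding w_def e_def Z_def by simp
  have "\<forall>i\<in>{1..ader_N L}. w i * e i / Z > 0" using wp Zp unfolding e_def by auto
  moreover have "(\<Sum>i=1..ader_N L. w i * e i / Z) = 1"
    using Zp unfolding Z_def by (simp add: sum_divide_distrib[symmetric])
  ultimately show ?case unfolding eq by auto
qed

lemma ader_play_in:
  assumes "\<forall>i\<ge>1. y0 i \<in> \<Omega>"
  shows "ader_play f g \<Omega> D G L a y0 k \<in> \<Omega>"
  unfolding ader_play_def
proof (rule convex_sum[OF _ cvx])
  show "(\<Sum>i = 1..ader_N L. ader_weight f g \<Omega> D G L a y0 k i) = 1"
    using ader_weight_props[of L a y0 k] by simp
  fix i assume "i \<in> {1..ader_N L}"
  then show "ader_weight f g \<Omega> D G L a y0 k i \<ge> 0" "ader_expert g \<Omega> D G L a y0 i k \<in> \<Omega>"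
    using ader_weight_props[of L a y0 k] ader_expert_in[OF assms] by (auto simp: less_imp_le)
qed auto

end


context oco begin

lemma hedge_regret:
  fixes L a :: nat and y0 :: "nat \<Rightarrow> 'a"
  defines "W \<equiv> ader_weight f g \<Omega> D G L a y0"
    and "ls \<equiv> (\<lambda>k i. f (a + k) (ader_expert g \<Omega> D G L a y0 i k))"
  assumes a1: "a \<ge> 1" and L0: "L > 0" and y0: "\<forall>i\<ge>1. y0 i \<in> \<Omega>" and j: "j \<in> {1..ader_N L}"
  shows "(\<Sum>k<n. \<Sum>i=1..ader_N L. W k i * ls k i)
     \<le> (\<Sum>k<n. ls k j) + ln (1 / ader_p1 L j) / ader_alpha L + ader_alpha L * n / 2"
proof -
  define N where "N = ader_N L"
  define \<alpha> where "\<alpha> = ader_alpha L"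
  have \<alpha>p: "\<alpha> > 0" unfolding \<alpha>_def ader_alpha_def using L0 by simp
  have lsb: "\<And>k i. i \<ge> 1 \<Longrightarrow> 0 \<le> ls k i \<and> ls k i \<le> 1"
    unfolding ls_def using fb a1 ader_expert_in[OF y0] by auto
  have Wp: "\<And>k i. i \<in> {1..N} \<Longrightarrow> W k i > 0" and Ws: "\<And>k. (\<Sum>i=1..N. W k i) = 1"
    unfolding W_def N_def using ader_weight_props[of L a y0] by auto
  define Z where "Z = (\<lambda>k. \<Sum>i=1..N. W k i * exp (- \<alpha> * ls k i))"
  have Zp: "\<And>k. Z k > 0" unfolding Z_def N_def using Wp ader_N_pos[of L] unfolding N_def
    by (intro sum_pos) auto
  have Wsuc: "\<And>k i. W (Suc k) i = W k i * exp (- \<alpha> * ls k i) / Z k"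
    unfolding W_def Z_def ls_def \<alpha>_def N_def by simp
  have lnW: "ln (W (Suc k) j) = ln (W k j) - \<alpha> * ls k j - ln (Z k)" for k
  proof -
    have "W k j > 0" using Wp j unfolding N_def by auto
    then show ?thesis unfolding Wsuc using Zp[of k] by (simp add: ln_div ln_mult)
  qed
  have lnZ: "ln (Z k) \<le> - \<alpha> * (\<Sum>i=1..N. W k i * ls k i) + \<alpha>^2/2" for k
  proof -
    have "Z k \<le> (\<Sum>i=1..N. W k i * (1 - \<alpha> * ls k i + \<alpha>^2/2))"
      unfolding Z_def
    proof (intro sum_mono mult_left_mono)
      fix i assume i: "i \<in> {1..N}"
      then have l: "0 \<le> ls k i" "ls k i \<le> 1" using lsb[of i k] by auto
      have "exp (- (\<alpha> * ls k i)) \<le> 1 - \<alpha> * ls k i + (\<alpha> * ls k i)^2/2"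
        using l \<alpha>p by (intro exp_neg_upper) auto
      also have "(\<alpha> * ls k i)^2 \<le> \<alpha>^2"
        using l \<alpha>p by (simp add: power_mult_distrib power_le_one mult_le_cancel_left1)
      finally show "exp (- \<alpha> * ls k i) \<le> 1 - \<alpha> * ls k i + \<alpha>^2/2" by simp
      show "0 \<le> W k i" using Wp[OF i, of k] by simp
    qed
    also have "\<dots> = (\<Sum>i=1..N. W k i) * (1 + \<alpha>^2/2) - \<alpha> * (\<Sum>i=1..N. W k i * ls k i)"
      by (simp add: algebra_simps sum.distrib sum_distrib_left sum_distrib_right sum_subtractf)
    also have "\<dots> = 1 - \<alpha> * (\<Sum>i=1..N. W k i * ls k i) + \<alpha>^2/2" using Ws[of k] by simp
    finally have "Z k \<le> 1 - \<alpha> * (\<Sum>i=1..N. W k i * ls k i) + \<alpha>^2/2" .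
    moreover have "ln (Z k) \<le> Z k - 1" using Zp[of k] by (rule ln_le_minus_one)
    ultimately show ?thesis by linarith
  qed
  have tel: "ln (W n j) = ln (W 0 j) - \<alpha> * (\<Sum>k<n. ls k j) - (\<Sum>k<n. ln (Z k))" for n
    by (induction n) (simp_all add: lnW algebra_simps)
  have W0: "W 0 j = ader_p1 L j" unfolding W_def by simp
  have Wle: "W n j \<le> 1"
  proof -
    have "W n j \<le> (\<Sum>i=1..N. W n i)"
      using j Wp unfolding N_def by (intro member_le_sum) (auto simp: less_imp_le N_def)
    then show ?thesis using Ws by simp
  qed
  have "ln (W n j) \<le> 0" using Wle Wp[of j n] j unfolding N_def by simp
  moreover have "(\<Sum>k<n. ln (Z k)) \<le> (\<Sum>k<n. - \<alpha> * (\<Sum>i=1..N. W k i * ls k i) + \<alpha>^2/2)"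
    by (intro sum_mono lnZ)
  moreover have "(\<Sum>k<n. - \<alpha> * (\<Sum>i=1..N. W k i * ls k i) + \<alpha>^2/2)
      = - \<alpha> * (\<Sum>k<n. \<Sum>i=1..N. W k i * ls k i) + n * \<alpha>^2/2"
    by (simp add: sum.distrib sum_distrib_left)
  ultimately have "\<alpha> * (\<Sum>k<n. \<Sum>i=1..N. W k i * ls k i) \<le> \<alpha> * (\<Sum>k<n. ls k j) - ln (ader_p1 L j) + n * \<alpha>^2/2"
    using tel[of n, unfolded W0] by linarith
  then have "(\<Sum>k<n. \<Sum>i=1..N. W k i * ls k i) \<le> ((\<Sum>k<n. ls k j) * \<alpha> - ln (ader_p1 L j) + n * \<alpha>^2/2) / \<alpha>"
    using \<alpha>p by (simp add: field_simps)
  also have "\<dots> = (\<Sum>k<n. ls k j) + ln (1 / ader_p1 L j) / \<alpha> + \<alpha> * n / 2"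
    using \<alpha>p ader_p1_pos[of j L] j by (simp add: field_simps ln_div power2_eq_square)
  finally show ?thesis unfolding N_def \<alpha>_def .
qed

end


lemma pow_floor_sqrt:
  fixes q :: real assumes q1: "q \<ge> 1"
  defines "z \<equiv> \<lfloor>log 2 q / 2\<rfloor>"
  shows "z \<ge> 0" "2 ^ nat z \<le> sqrt q" "sqrt q < 2 * 2 ^ nat z"
proof -
  define m where "m = log 2 q / 2"
  have m0: "m \<ge> 0" unfolding m_def using q1 by simp
  show z0: "z \<ge> 0" unfolding z_def using m0 m_def by simp
  have sq: "sqrt q = 2 powr m"
  proof -
    have "2 powr m = (2 powr (log 2 q)) powr (1/2)" unfolding m_def by (simp add: powr_powr)
    also have "\<dots> = q powr (1/2)" using q1 by simp
    also have "\<dots> = sqrt q" using q1 by (simp add: powr_half_sqrt)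
    finally show ?thesis by simp
  qed
  have pz: "(2::real) ^ nat z = 2 powr (real_of_int z)"
    using z0 by (simp add: powr_realpow[symmetric])
  have "real_of_int z \<le> m" unfolding z_def m_def by (rule of_int_floor_le)
  then have "2 powr (real_of_int z) \<le> 2 powr m" by (intro powr_mono) auto
  then show "2 ^ nat z \<le> sqrt q" using pz sq by simp
  have "m < real_of_int z + 1" unfolding z_def m_def by linarith
  then have "2 powr m < 2 powr (real_of_int z + 1)" by (intro powr_less_mono) auto
  also have "\<dots> = 2 * 2 powr (real_of_int z)" by (simp add: powr_add)
  finally show "sqrt q < 2 * 2 ^ nat z" using pz sq by simp
qed

context oco begin

lemma ader_regret:
  fixes L a :: nat and y0 :: "nat \<Rightarrow> 'a" and u :: "nat \<Rightarrow> 'a"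
  defines "P \<equiv> (\<Sum>k<L. norm (u (a+k+1) - u (a+k)))"
  assumes a1: "a \<ge> 1" and L0: "L > 0" and y0: "\<forall>i\<ge>1. y0 i \<in> \<Omega>" and uin: "\<forall>k\<le>L. u (a+k) \<in> \<Omega>"
  shows "(\<Sum>k<L. f (a+k) (ader_play f g \<Omega> D G L a y0 k) - f (a+k) (u (a+k)))
     \<le> sqrt L * (ln (real (nat (k_I P D)) + 1) + sqrt 2 + 3*D*G) + 3*G* sqrt (D*P)* sqrt L"
proof -
  define N where "N = ader_N L"
  define W where "W = ader_weight f g \<Omega> D G L a y0"
  define ls where "ls = (\<lambda>k i. f (a + k) (ader_expert g \<Omega> D G L a y0 i k))"
  define \<alpha> where "\<alpha> = ader_alpha L"
  define q where "q = 1 + 4*P/(7*D)"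
  define z where "z = \<lfloor>log 2 q / 2\<rfloor>"
  define j where "j = nat (k_I P D)"
  have P0: "P \<ge> 0" unfolding P_def by (simp add: sum_nonneg)
  have PDL: "P \<le> D * L"
  proof -
    have "P \<le> (\<Sum>k<L. D)" unfolding P_def
    proof (intro sum_mono)
      fix k assume "k \<in> {..<L}"
      then have "u (a+k+1) \<in> \<Omega>" "u (a+k) \<in> \<Omega>" using uin[rule_format, of "k+1"] uin by auto
      then show "norm (u (a+k+1) - u (a+k)) \<le> D" using diam by auto
    qed
    then show ?thesis by (simp add: mult.commute)
  qed
  have q1: "q \<ge> 1" unfolding q_def using P0 Dp by simp
  have z: "z \<ge> 0" "2 ^ nat z \<le> sqrt q" "sqrt q < 2 * 2 ^ nat z"
    using pow_floor_sqrt[OF q1] unfolding z_def by auto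
  have jz: "j = nat z + 1" unfolding j_def k_I_def z_def q_def using z(1) z_def q_def
    by (simp add: nat_add_distrib)
  have j1: "j \<ge> 1" using jz by simp
  have jN: "j \<le> N"
  proof -
    have "q \<le> 1 + 4 * real L / 7" unfolding q_def using PDL Dp by (simp add: field_simps)
    then have "log 2 q / 2 \<le> log 2 (1 + 4 * real L / 7) / 2" using q1 by (simp add: divide_right_mono)
    then have "z \<le> \<lceil>log 2 (1 + 4 * real L / 7) / 2\<rceil>" unfolding z_def
      by (meson floor_le_ceiling order_trans floor_mono le_ceiling_iff ceiling_mono)
    then show ?thesis unfolding N_def ader_N_def using jz z(1) by linarith
  qed
  have jin: "j \<in> {1..ader_N L}" using j1 jN unfolding N_def by simp
  have \<alpha>p: "\<alpha> > 0" unfolding \<alpha>_def ader_alpha_def using L0 by simp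
  have jens: "f (a+k) (ader_play f g \<Omega> D G L a y0 k) \<le> (\<Sum>i=1..N. W k i * ls k i)" for k
    unfolding ader_play_def ls_def W_def N_def
  proof (rule convex_on_sum[OF _ _ _ _ _ _])
    show "convex_on \<Omega> (f (a+k))" using fcvx a1 by auto
    show "(\<Sum>i = 1..ader_N L. ader_weight f g \<Omega> D G L a y0 k i) = 1"
      using ader_weight_props[of L a y0 k] by simp
    fix i assume "i \<in> {1..ader_N L}"
    then show "ader_weight f g \<Omega> D G L a y0 k i \<ge> 0" "ader_expert g \<Omega> D G L a y0 i k \<in> \<Omega>"
      using ader_weight_props[of L a y0 k] ader_expert_in[OF y0] by (auto simp: less_imp_le)
  qed (use ader_N_pos[of L] in auto)
  have hedge: "(\<Sum>k<L. \<Sum>i=1..N. W k i * ls k i) \<le> (\<Sum>k<L. ls k j) + ln (1 / ader_p1 L j) / \<alpha> + \<alpha> * L / 2"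
    unfolding W_def ls_def N_def \<alpha>_def by (rule hedge_regret[OF a1 L0 y0 jin])
  define \<eta> where "\<eta> = ader_eta D G L j"
  define c where "c = D / G * sqrt (7 / (2 * real L))"
  have cp: "c > 0" unfolding c_def using Dp Gp L0 by simp
  have \<eta>eq: "\<eta> = 2 ^ nat z * c" unfolding \<eta>_def ader_eta_def c_def using jz by simp
  have \<eta>p: "\<eta> > 0" using \<eta>eq cp by simp
  have ogd: "(\<Sum>k<L. ls k j - f (a+k) (u (a+k))) \<le> (D^2 + 2*D*P)/(2*\<eta>) + \<eta>*G^2*L/2"
    unfolding ls_def ader_expert_def \<eta>_def P_def
    using ogd_regret[OF a1 _ _ uin] \<eta>p y0 j1 unfolding \<eta>_def by auto
  define s where "s = c * sqrt q"
  define X where "X = 7*D^2/2 + 2*D*P"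
  have sp: "s > 0" unfolding s_def using cp q1 by simp
  have s1: "\<eta> \<le> s" unfolding s_def \<eta>eq using z(2) cp by (simp add: mult.commute)
  have s2: "s \<le> 2*\<eta>" unfolding s_def \<eta>eq using z(3) cp by (simp add: mult.commute)
  have Xs: "X = s^2 * G^2 * L"
  proof -
    have c2: "c^2 = D^2/G^2 * (7/(2*real L))" unfolding c_def using L0 by (simp add: power_mult_distrib power_divide)
    have "s^2 * G^2 * L = c^2 * q * G^2 * L" unfolding s_def using q1 by (simp add: power_mult_distrib)
    also have "\<dots> = (D^2/G^2 * (7/(2*real L))) * q * G^2 * L" unfolding c2 ..
    also have "\<dots> = 7*D^2/2 * q"
    proof -
      have "G^2 \<noteq> 0" "real L \<noteq> 0" using Gp L0 by auto
      then show ?thesis by (simp add: divide_simps)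
    qed
    also have "\<dots> = X"
    proof -
      have "D \<noteq> 0" using Dp by simp
      then show ?thesis unfolding q_def X_def by (simp add: algebra_simps add_divide_distrib power2_eq_square)
    qed
    finally show ?thesis by simp
  qed
  have X0: "X \<ge> 0" unfolding X_def using Dp P0 by simp
  have t1: "(D^2 + 2*D*P)/(2*\<eta>) \<le> s * G^2 * L"
  proof -
    have "(D^2 + 2*D*P)/(2*\<eta>) \<le> X/(2*\<eta>)" unfolding X_def using \<eta>p Dp by (intro divide_right_mono) auto
    also have "\<dots> \<le> X / s" using X0 sp s2 by (intro divide_left_mono) auto
    also have "\<dots> = s * G^2 * L" unfolding Xs using sp by (simp add: power2_eq_square)
    finally show ?thesis .
  qed
  have t2: "\<eta>*G^2*L/2 \<le> s*G^2*L/2" using s1 by (intro divide_right_mono mult_right_mono) auto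
  have sG: "s * G^2 * L = G * sqrt L * sqrt X"
  proof -
    have "sqrt X = s * G * sqrt L" unfolding Xs using sp Gp by (simp add: real_sqrt_mult)
    then show ?thesis using L0 by (simp add: power2_eq_square)
  qed
  have sqX: "sqrt X \<le> 2*D + sqrt 2 * sqrt (D*P)"
  proof -
    have "sqrt X \<le> sqrt (7*D^2/2) + sqrt (2*D*P)" unfolding X_def
      using Dp P0 by (intro sqrt_add_le_add_sqrt) auto
    also have "sqrt (7*D^2/2) \<le> sqrt (4*D^2)" by simp
    also have "sqrt (4*D^2) = 2*D" using Dp by (simp add: real_sqrt_mult)
    also have "sqrt (2*D*P) = sqrt 2 * sqrt (D*P)" by (simp add: real_sqrt_mult[symmetric] mult.assoc)
    finally show ?thesis by simp
  qed
  have ogdb: "(\<Sum>k<L. ls k j - f (a+k) (u (a+k))) \<le> 3*D*G* sqrt L + 3*G* sqrt (D*P)* sqrt L"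
  proof -
    have "(\<Sum>k<L. ls k j - f (a+k) (u (a+k))) \<le> 3/2 * (G * sqrt L * sqrt X)"
      using ogd t1 t2 sG by linarith
    also have "\<dots> \<le> 3/2 * (G * sqrt L * (2*D + sqrt 2 * sqrt (D*P)))"
      using sqX Gp by (intro mult_left_mono) auto
    also have "\<dots> = 3*D*G* sqrt L + (3/2 * sqrt 2) * (G * sqrt (D*P) * sqrt L)" by (simp add: algebra_simps)
    also have "\<dots> \<le> 3*D*G* sqrt L + 3 * (G * sqrt (D*P) * sqrt L)"
    proof -
      have "sqrt 2 \<le> (2::real)" by (rule real_le_lsqrt) auto
      then have "3/2 * sqrt 2 \<le> (3::real)" by simp
      then show ?thesis using Gp Dp P0 by (intro add_left_mono mult_right_mono) auto
    qed
    finally show ?thesis by (simp add: algebra_simps)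
  qed
  have lnp: "ln (1 / ader_p1 L j) / \<alpha> \<le> sqrt L * ln (real j + 1)"
  proof -
    have pj: "ader_p1 L j > 0" using ader_p1_pos j1 by simp
    have "ader_p1 L j \<ge> 1/((real j + 1)^2)"
    proof -
      have "1/((real j + 1)^2) \<le> 1/(real j * (real j + 1))"
        using j1 by (intro divide_left_mono) (auto simp: power2_eq_square)
      also have "\<dots> \<le> ader_p1 L j" unfolding ader_p1_def
        by (intro divide_right_mono) auto
      finally show ?thesis .
    qed
    then have "1 / ader_p1 L j \<le> (real j + 1)^2" using pj by (simp add: field_simps)
    then have "ln (1 / ader_p1 L j) \<le> ln ((real j + 1)^2)" using pj by simp
    also have "\<dots> = 2 * ln (real j + 1)" by (simp add: ln_realpow)
    finally have l1: "ln (1 / ader_p1 L j) \<le> 2 * ln (real j + 1)" .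
    have ia: "1/\<alpha> \<le> sqrt L / 2"
    proof -
      have "1/\<alpha> = sqrt L / sqrt 8" unfolding \<alpha>_def ader_alpha_def using L0 by (simp add: real_sqrt_divide)
      also have "\<dots> \<le> sqrt L / 2"
      proof -
        have "(2::real) \<le> sqrt 8" by (simp add: real_le_rsqrt)
        then show ?thesis by (intro divide_left_mono) auto
      qed
      finally show ?thesis .
    qed
    have lj0: "ln (real j + 1) \<ge> 0" by simp
    have "ln (1 / ader_p1 L j) / \<alpha> \<le> 2 * ln (real j + 1) / \<alpha>" using l1 \<alpha>p by (intro divide_right_mono) auto
    also have "\<dots> = 2 * ln (real j + 1) * (1/\<alpha>)" by simp
    also have "\<dots> \<le> 2 * ln (real j + 1) * (sqrt L / 2)" using ia lj0 by (intro mult_left_mono) auto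
    finally show ?thesis by (simp add: mult.commute)
  qed
  have aL: "\<alpha> * L / 2 = sqrt 2 * sqrt L"
  proof -
    have sL: "sqrt (real L) > 0" using L0 by simp
    have LL: "real L = sqrt L * sqrt L" by simp
    have "\<alpha> = sqrt 8 / sqrt L" unfolding \<alpha>_def ader_alpha_def by (rule real_sqrt_divide)
    then have "\<alpha> * L = sqrt 8 / sqrt L * (sqrt L * sqrt L)" using LL by simp
    also have "\<dots> = sqrt 8 * sqrt L" using sL by (simp add: field_simps)
    finally have e1: "\<alpha> * L = sqrt 8 * sqrt L" .
    have "sqrt (8::real) = sqrt (4 * 2)" by simp
    also have "\<dots> = sqrt 4 * sqrt 2" by (rule real_sqrt_mult)
    also have "\<dots> = 2 * sqrt 2" by simp
    finally have e2: "sqrt (8::real) = 2 * sqrt 2" .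
    show ?thesis unfolding e1 e2 by simp
  qed
  have "(\<Sum>k<L. f (a+k) (ader_play f g \<Omega> D G L a y0 k) - f (a+k) (u (a+k)))
      = (\<Sum>k<L. f (a+k) (ader_play f g \<Omega> D G L a y0 k)) - (\<Sum>k<L. f (a+k) (u (a+k)))"
    by (simp add: sum_subtractf)
  also have "\<dots> \<le> (\<Sum>k<L. \<Sum>i=1..N. W k i * ls k i) - (\<Sum>k<L. f (a+k) (u (a+k)))"
    using jens by (intro diff_right_mono sum_mono) auto
  also have "\<dots> \<le> (\<Sum>k<L. ls k j - f (a+k) (u (a+k))) + ln (1 / ader_p1 L j) / \<alpha> + \<alpha> * L / 2"
    using hedge by (simp add: sum_subtractf)
  also have "\<dots> \<le> 3*D*G* sqrt L + 3*G* sqrt (D*P)* sqrt L + sqrt L * ln (real j + 1) + sqrt 2 * sqrt L"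
    using ogdb lnp aL by linarith
  also have "\<dots> = sqrt L * (ln (real j + 1) + sqrt 2 + 3*D*G) + 3*G* sqrt (D*P)* sqrt L"
    by (simp add: algebra_simps)
  finally show ?thesis unfolding j_def .
qed

end


lemma geo_E:
  assumes "J \<in> geo_intervals"
  obtains i k where "i \<ge> 1" "J = {i*2^k ..< (i+1)*2^k}"
proof -
  obtain i k where ik: "i \<ge> 1" "J = {i*2^k .. (i+1)*2^k - 1}"
    using assms unfolding geo_intervals_def by auto
  have "(i+1)*2^k = Suc ((i+1)*2^k - 1)" by simp
  then have "{i*2^k .. (i+1)*2^k - 1} = {i*2^k ..< (i+1)*2^k}"
    by (metis atLeastLessThanSuc_atLeastAtMost)
  then show ?thesis using that ik by auto
qed

lemma geo_I:
  assumes "a \<ge> 1" "2^k dvd a"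
  shows "{a ..< a + 2^k} \<in> geo_intervals"
proof -
  obtain i where i: "a = 2^k * i" using assms(2) by (auto elim: dvdE)
  have i1: "i \<ge> 1" using assms(1) i by (cases i) auto
  have e: "(i+1)*2^k = Suc ((i+1)*2^k - 1)" by simp
  have "{a ..< a + 2^k} = {i*2^k ..< (i+1)*2^k}" using i by (simp add: algebra_simps)
  also have "\<dots> = {i*2^k .. (i+1)*2^k - 1}" using e by (metis atLeastLessThanSuc_atLeastAtMost)
  finally have "{a ..< a + 2^k} = {i*2^k .. (i+1)*2^k - 1}" .
  then show ?thesis unfolding geo_intervals_def using i1 by blast
qed

lemma geo_props:
  assumes "J \<in> geo_intervals"
  shows "finite J" "J \<noteq> {}" "Min J \<ge> 1" "J = {Min J ..< Min J + card J}" "card J \<ge> 1"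
    "\<exists>k. card J = 2^k \<and> 2^k dvd Min J"
proof -
  obtain i k where ik: "i \<ge> 1" "J = {i*2^k ..< (i+1)*2^k}" using geo_E[OF assms] by blast
  have lt: "i*2^k < (i+1)*2^k" by simp
  show "finite J" using ik by simp
  show "J \<noteq> {}" using ik lt by auto
  have mn: "Min J = i*2^k" using ik lt by (simp add: Min_eq_iff)
  have cd: "card J = 2^k" using ik by (simp add: algebra_simps)
  show "Min J \<ge> 1" using mn ik(1) by simp
  show "J = {Min J ..< Min J + card J}" using ik mn cd by (simp add: algebra_simps)
  show "card J \<ge> 1" using cd by simp
  show "\<exists>k. card J = 2^k \<and> 2^k dvd Min J" using cd mn by auto
qed

lemma active_sub: "t \<ge> 1 \<Longrightarrow> active t \<subseteq> (\<lambda>(i,k). {i*2^k .. (i+1)*2^k - 1}) ` ({1..t} \<times> {..t})"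
proof
  fix J assume t: "t \<ge> 1" and J: "J \<in> active t"
  then obtain i k where ik: "i \<ge> 1" "J = {i*2^k .. (i+1)*2^k - 1}" "t \<in> J"
    unfolding active_def geo_intervals_def by auto
  have le: "i * 2^k \<le> t" using ik by auto
  have "i \<le> t" using le ik(1) by (metis dual_order.trans le_add1 mult_le_mono2 mult.commute mult_1 one_le_power Suc_leI zero_less_numeral one_le_numeral)
  moreover have "k \<le> t"
  proof -
    have "k < 2^k" by (rule less_exp)
    also have "2^k \<le> i * 2^k" using ik(1) by simp
    finally show ?thesis using le by simp
  qed
  ultimately show "J \<in> (\<lambda>(i,k). {i*2^k .. (i+1)*2^k - 1}) ` ({1..t} \<times> {..t})"
    using ik by force
qed

lemma active_finite: "t \<ge> 1 \<Longrightarrow> finite (active t)"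
  using active_sub by (rule finite_subset) auto

lemma aoa_hist_len: "length (aoa_hist f g \<Omega> D G x0 n) = n"
  by (induction n) auto

lemma aoa_hist_nth: "u < n \<Longrightarrow> aoa_hist f g \<Omega> D G x0 n ! u = aoa f g \<Omega> D G x0 (Suc u)"
proof (induction n)
  case 0 then show ?case by simp
next
  case (Suc n)
  show ?case
  proof (cases "u < n")
    case True
    then show ?thesis using Suc by (simp add: nth_append aoa_hist_len)
  next
    case False
    then have "u = n" using Suc by simp
    then show ?thesis unfolding aoa_def by simp
  qed
qed

lemma aoa_eq_next: "t \<ge> 1 \<Longrightarrow> aoa f g \<Omega> D G x0 t = aoa_next f g \<Omega> D G x0 (aoa_hist f g \<Omega> D G x0 (t - 1))"
  unfolding aoa_def by (cases t) (auto simp: nth_append aoa_hist_len)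



context oco begin

definition "wp t = aoa f g \<Omega> D G x0 t"
definition "ep J t = expert_play f g \<Omega> D G x0 J t"
definition "rr J u = f u (wp u) - f u (ep J u)"
definition "Rt J t = (\<Sum>u\<in>{Min J..<t}. rr J u)"
definition "Ct J t = (\<Sum>u\<in>{Min J..<t}. \<bar>rr J u\<bar>)"
definition "Wt J t = anh_w (Rt J t) (Ct J t)"

lemma active_geo: "J \<in> active t \<Longrightarrow> J \<in> geo_intervals" unfolding active_def by auto

lemma wp_eq:
  assumes t1: "t \<ge> 1"
  shows "wp t = (\<Sum>J\<in>active t. (Wt J t / (\<Sum>J'\<in>active t. Wt J' t)) *\<^sub>R ep J t)"
proof -
  define hs where "hs = aoa_hist f g \<Omega> D G x0 (t - 1)"
  have len: "length hs + 1 = t" unfolding hs_def using t1 by (simp add: aoa_hist_len)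
  have hsn: "hs ! (u - 1) = wp u" if "1 \<le> u" "u < t" for u
    unfolding hs_def wp_def using that aoa_hist_nth[of "u - 1" "t - 1" f g \<Omega> D G x0] by simp
  have RW: "anh_w (\<Sum>u \<in> {Min J..<t}. f u (hs ! (u - 1)) - f u (expert_play f g \<Omega> D G x0 J u))
                  (\<Sum>u \<in> {Min J..<t}. \<bar>f u (hs ! (u - 1)) - f u (expert_play f g \<Omega> D G x0 J u)\<bar>)
            = Wt J t" if "J \<in> active t" for J
  proof -
    have m1: "Min J \<ge> 1" using geo_props(3)[OF active_geo[OF that]] .
    have "\<And>u. u \<in> {Min J..<t} \<Longrightarrow> hs ! (u - 1) = wp u" using m1 hsn by auto
    then show ?thesis unfolding Wt_def Rt_def Ct_def rr_def ep_def
      by (intro arg_cong2[where f = anh_w] sum.cong) auto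
  qed
  have den: "(\<Sum>J'\<in>active t. anh_w (\<Sum>u \<in> {Min J'..<t}. f u (hs ! (u - 1)) - f u (expert_play f g \<Omega> D G x0 J' u))
                  (\<Sum>u \<in> {Min J'..<t}. \<bar>f u (hs ! (u - 1)) - f u (expert_play f g \<Omega> D G x0 J' u)\<bar>))
        = (\<Sum>J'\<in>active t. Wt J' t)"
    by (rule sum.cong[OF refl RW])
  have "wp t = aoa_next f g \<Omega> D G x0 hs" unfolding wp_def hs_def using aoa_eq_next[OF t1] by simp
  also have "\<dots> = (\<Sum>J\<in>active t. (Wt J t / (\<Sum>J'\<in>active t. Wt J' t)) *\<^sub>R ep J t)"
    unfolding aoa_next_def Let_def len den
    by (rule sum.cong[OF refl]) (simp only: RW ep_def)
  finally show ?thesis .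
qed

lemma ep_in: "J \<in> geo_intervals \<Longrightarrow> ep J t \<in> \<Omega>"
  unfolding ep_def expert_play_def using x0in by (intro ader_play_in) auto

lemma Ct_nonneg: "Ct J t \<ge> 0" unfolding Ct_def by (simp add: sum_nonneg)

lemma Wt_nonneg: "Wt J t \<ge> 0" unfolding Wt_def using Ct_nonneg by (rule anh_w_nonneg)

lemma wp_in:
  assumes t1: "t \<ge> 1" shows "wp t \<in> \<Omega>"
proof (cases "(\<Sum>J'\<in>active t. Wt J' t) = 0")
  case True
  then show ?thesis using wp_eq[OF t1] zero_in by simp
next
  case False
  define S where "S = (\<Sum>J'\<in>active t. Wt J' t)"
  have "S \<ge> 0" unfolding S_def by (intro sum_nonneg) (simp add: Wt_nonneg)
  then have Sp: "S > 0" using False unfolding S_def by linarith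
  show ?thesis unfolding wp_eq[OF t1]
  proof (rule convex_sum[OF active_finite[OF t1] cvx])
    show "(\<Sum>J\<in>active t. Wt J t / (\<Sum>J'\<in>active t. Wt J' t)) = 1"
      using Sp unfolding S_def by (simp add: sum_divide_distrib[symmetric])
    fix J assume "J \<in> active t"
    then show "Wt J t / (\<Sum>J'\<in>active t. Wt J' t) \<ge> 0" "ep J t \<in> \<Omega>"
      using Wt_nonneg ep_in active_geo by (auto intro!: divide_nonneg_nonneg sum_nonneg)
  qed
qed

lemma rr_bound:
  assumes "u \<ge> 1" "J \<in> geo_intervals"
  shows "\<bar>rr J u\<bar> \<le> 1"
proof -
  have "0 \<le> f u (wp u)" "f u (wp u) \<le> 1" "0 \<le> f u (ep J u)" "f u (ep J u) \<le> 1"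
    using fb assms wp_in ep_in by auto
  then show ?thesis unfolding rr_def by linarith
qed

lemma meta_neg:
  assumes t1: "t \<ge> 1"
  shows "(\<Sum>J\<in>active t. Wt J t * rr J t) \<le> 0"
proof (cases "(\<Sum>J'\<in>active t. Wt J' t) = 0")
  case True
  have "\<forall>J\<in>active t. Wt J t = 0"
    using True by (subst (asm) sum_nonneg_eq_0_iff) (auto simp: active_finite[OF t1] Wt_nonneg)
  then show ?thesis by simp
next
  case False
  define S where "S = (\<Sum>J'\<in>active t. Wt J' t)"
  have "S \<ge> 0" unfolding S_def by (intro sum_nonneg) (simp add: Wt_nonneg)
  then have Sp: "S > 0" using False unfolding S_def by linarith
  have ne: "active t \<noteq> {}" using False by auto
  have jens: "f t (wp t) \<le> (\<Sum>J\<in>active t. (Wt J t / S) * f t (ep J t))"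
    unfolding wp_eq[OF t1] S_def[symmetric]
  proof (rule convex_on_sum[OF active_finite[OF t1] ne])
    show "convex_on \<Omega> (f t)" using fcvx t1 by auto
    show "(\<Sum>J\<in>active t. Wt J t / S) = 1"
      using Sp unfolding S_def by (simp add: sum_divide_distrib[symmetric])
    fix J assume "J \<in> active t"
    then show "Wt J t / S \<ge> 0" "ep J t \<in> \<Omega>"
      using Wt_nonneg ep_in active_geo Sp by auto
  qed
  have "(\<Sum>J\<in>active t. Wt J t * rr J t) = (\<Sum>J\<in>active t. Wt J t * f t (wp t)) - (\<Sum>J\<in>active t. Wt J t * f t (ep J t))"
    unfolding rr_def by (simp add: algebra_simps sum_subtractf)
  also have "(\<Sum>J\<in>active t. Wt J t * f t (wp t)) = S * f t (wp t)"
    unfolding S_def by (simp add: sum_distrib_right)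
  also have "(\<Sum>J\<in>active t. Wt J t * f t (ep J t)) = S * (\<Sum>J\<in>active t. (Wt J t / S) * f t (ep J t))"
    using Sp by (simp add: sum_distrib_left)
  finally show ?thesis using jens Sp
    by (smt (verit) mult_left_mono)
qed

end


lemma ln_step:
  fixes x c :: real assumes "0 \<le> x" "x \<le> 1" "c \<ge> 0"
  shows "x/(c+1) \<le> 2 * ln (1 + (c + x)) - 2 * ln (1 + c)"
proof -
  have y: "0 \<le> x / (1 + c)" "x / (1 + c) \<le> 1" using assms by auto
  have "x / (1 + c) \<le> 2 * ln (1 + x / (1 + c))" by (rule ln_one_plus_lower[OF y])
  also have "1 + x / (1 + c) = (1 + (c + x)) / (1 + c)" using assms by (simp add: field_simps)
  also have "ln \<dots> = ln (1 + (c + x)) - ln (1 + c)" using assms by (simp add: ln_div)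
  finally show ?thesis by (simp add: add.commute)
qed

context oco begin

definition "Rf J t = (\<Sum>u\<in>J \<inter> {..<t}. rr J u)"
definition "Cf J t = (\<Sum>u\<in>J \<inter> {..<t}. \<bar>rr J u\<bar>)"
definition "Bf J t = 1 + 2 * (\<Sum>u\<in>J \<inter> {..<t}. \<bar>rr J u\<bar> / (Cf J u + 1))"
definition "Es s = {J \<in> geo_intervals. Min J \<le> s}"

lemma geo_mem_ge1: "J \<in> geo_intervals \<Longrightarrow> u \<in> J \<Longrightarrow> u \<ge> 1"
  using geo_props(3)[of J] geo_props(1)[of J] by (meson Min_le order_trans)

lemma inter_notin: "t \<notin> J \<Longrightarrow> J \<inter> {..<Suc t} = J \<inter> {..<t}"
  by (auto simp: less_Suc_eq)

lemma inter_in: "t \<in> J \<Longrightarrow> J \<inter> {..<Suc t} = insert t (J \<inter> {..<t})"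
  by (auto simp: less_Suc_eq)

lemma inter_eq_ivl:
  assumes J: "J \<in> geo_intervals" and t: "t \<in> J"
  shows "J \<inter> {..<t} = {Min J..<t}"
proof -
  have e: "J = {Min J ..< Min J + card J}" by (rule geo_props(4)[OF J])
  have "t < Min J + card J" using t e by auto
  then show ?thesis by (subst e) auto
qed

lemma fin_inter: "J \<in> geo_intervals \<Longrightarrow> finite (J \<inter> {..<t})"
  using geo_props(1) by auto

lemma Cf_nonneg: "Cf J t \<ge> 0" unfolding Cf_def by (simp add: sum_nonneg)

lemma Rf_le_Cf: "\<bar>Rf J t\<bar> \<le> Cf J t" unfolding Rf_def Cf_def by (rule sum_abs)

lemma pot_step:
  assumes J: "J \<in> geo_intervals"
  shows "anh_Phi (Rf J (Suc t)) (Cf J (Suc t)) - Bf J (Suc t)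
       \<le> anh_Phi (Rf J t) (Cf J t) - Bf J t + (if t \<in> J then Wt J t * rr J t else 0)"
proof (cases "t \<in> J")
  case False
  then show ?thesis unfolding Rf_def Cf_def Bf_def using inter_notin[OF False] by simp
next
  case True
  have fin: "finite (J \<inter> {..<t})" by (rule fin_inter[OF J])
  have nin: "t \<notin> J \<inter> {..<t}" by simp
  have t1: "t \<ge> 1" using geo_mem_ge1[OF J True] .
  have R: "Rf J (Suc t) = Rf J t + rr J t" unfolding Rf_def inter_in[OF True] using fin nin by simp
  have C: "Cf J (Suc t) = Cf J t + \<bar>rr J t\<bar>" unfolding Cf_def inter_in[OF True] using fin nin by simp
  have B: "Bf J (Suc t) = Bf J t + 2 * \<bar>rr J t\<bar> / (Cf J t + 1)"
    unfolding Bf_def inter_in[OF True] using fin nin by (simp add: algebra_simps)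
  have RR: "Rf J t = Rt J t" unfolding Rf_def Rt_def inter_eq_ivl[OF J True] ..
  have CC: "Cf J t = Ct J t" unfolding Cf_def Ct_def inter_eq_ivl[OF J True] ..
  have W: "Wt J t = anh_w (Rf J t) (Cf J t)" unfolding Wt_def RR CC ..
  have "anh_Phi (Rf J t + rr J t) (Cf J t + \<bar>rr J t\<bar>)
      \<le> anh_Phi (Rf J t) (Cf J t) + anh_w (Rf J t) (Cf J t) * rr J t + 2 * \<bar>rr J t\<bar> / (Cf J t + 1)"
    by (rule anh_potential[OF Cf_nonneg Rf_le_Cf rr_bound[OF t1 J]])
  then show ?thesis using True unfolding R C B W by simp
qed

lemma Bsum_bound:
  assumes J: "J \<in> geo_intervals"
  shows "(\<Sum>u\<in>J \<inter> {..<t}. \<bar>rr J u\<bar> / (Cf J u + 1)) \<le> 2 * ln (1 + Cf J t)"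
proof (induction t)
  case 0 then show ?case unfolding Cf_def by simp
next
  case (Suc t)
  show ?case
  proof (cases "t \<in> J")
    case False
    then show ?thesis using Suc unfolding Cf_def inter_notin[OF False] by simp
  next
    case True
    have fin: "finite (J \<inter> {..<t})" by (rule fin_inter[OF J])
    have nin: "t \<notin> J \<inter> {..<t}" by simp
    have t1: "t \<ge> 1" using geo_mem_ge1[OF J True] .
    have C: "Cf J (Suc t) = Cf J t + \<bar>rr J t\<bar>" unfolding Cf_def inter_in[OF True] using fin nin by simp
    have st: "\<bar>rr J t\<bar> / (Cf J t + 1) \<le> 2 * ln (1 + (Cf J t + \<bar>rr J t\<bar>)) - 2 * ln (1 + Cf J t)"
      using rr_bound[OF t1 J] Cf_nonneg by (intro ln_step) auto
    have "(\<Sum>u\<in>J \<inter> {..<Suc t}. \<bar>rr J u\<bar> / (Cf J u + 1))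
        = \<bar>rr J t\<bar> / (Cf J t + 1) + (\<Sum>u\<in>J \<inter> {..<t}. \<bar>rr J u\<bar> / (Cf J u + 1))"
      unfolding inter_in[OF True] using fin nin by simp
    also have "\<dots> \<le> 2 * ln (1 + Cf J (Suc t))" using Suc st unfolding C by linarith
    finally show ?thesis .
  qed
qed

lemma Cf_le:
  assumes J: "J \<in> geo_intervals"
  shows "t \<ge> 1 \<Longrightarrow> Cf J t \<le> real t - 1" and "Cf J t \<le> card (J \<inter> {..<t})"
proof -
  have "Cf J t \<le> (\<Sum>u\<in>J \<inter> {..<t}. 1)" unfolding Cf_def
    using rr_bound geo_mem_ge1[OF J] J by (intro sum_mono) auto
  then show c: "Cf J t \<le> card (J \<inter> {..<t})" by simp
  have "J \<inter> {..<t} \<subseteq> {1..<t}" using geo_mem_ge1[OF J] by auto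
  then have "card (J \<inter> {..<t}) \<le> card {1..<t}" by (intro card_mono) auto
  moreover assume "t \<ge> 1"
  ultimately have "real (card (J \<inter> {..<t})) \<le> real t - 1" by (cases t) auto
  then show "Cf J t \<le> real t - 1" using c by linarith
qed

lemma Bf_bound:
  assumes J: "J \<in> geo_intervals" and ts: "t \<le> s + 1"
  shows "Bf J t \<le> 1 + 4 * ln (1 + real s)"
proof -
  have "Cf J t \<le> real s"
  proof (cases "t = 0")
    case True then show ?thesis unfolding Cf_def by simp
  next
    case False then show ?thesis using Cf_le(1)[OF J, of t] ts by linarith
  qed
  then have "ln (1 + Cf J t) \<le> ln (1 + real s)" using Cf_nonneg[of J t] by simp
  then show ?thesis unfolding Bf_def using Bsum_bound[OF J, of t] by linarith
qed

lemma Es_sub: "Es s \<subseteq> (\<lambda>(i,k). {i*2^k .. (i+1)*2^k - 1}) ` ({1..s} \<times> {0..nat \<lfloor>log 2 (real s)\<rfloor>})"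
proof
  fix J assume J: "J \<in> Es s"
  then obtain i k where ik: "i \<ge> 1" "J = {i*2^k .. (i+1)*2^k - 1}"
    unfolding Es_def geo_intervals_def by auto
  have Jg: "J \<in> geo_intervals" using J unfolding Es_def by auto
  have q: "i*2^k < (i+1)*2^k" by simp
  then have "i*2^k \<le> (i+1)*2^k - 1" by linarith
  then have "i*2^k \<in> J" using ik by simp
  moreover have "\<forall>u\<in>J. i*2^k \<le> u" using ik by auto
  ultimately have mn: "Min J = i*2^k" using geo_props(1)[OF Jg] by (intro Min_eqI) auto
  have le: "i*2^k \<le> s" using J mn unfolding Es_def by auto
  have "i \<le> i*2^k" by simp
  then have "i \<le> s" using le by linarith
  moreover have "2^k \<le> s" using le ik(1) by (metis le_trans mult_le_mono1 mult_1)
  then have "real k \<le> log 2 (real s)" by (rule le_log2_of_power)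
  then have "k \<le> nat \<lfloor>log 2 (real s)\<rfloor>" by (simp add: le_nat_iff le_floor_iff)
  ultimately show "J \<in> (\<lambda>(i,k). {i*2^k .. (i+1)*2^k - 1}) ` ({1..s} \<times> {0..nat \<lfloor>log 2 (real s)\<rfloor>})"
    using ik by force
qed

lemma Es_finite: "finite (Es s)" using Es_sub by (rule finite_subset) auto

lemma Es_card:
  assumes s1: "s \<ge> 1"
  shows "real (card (Es s)) \<le> real s * (1 + log 2 (real s))"
proof -
  have "card (Es s) \<le> card ((\<lambda>(i,k). {i*2^k .. (i+1)*2^k - 1}) ` ({1..s} \<times> {0..nat \<lfloor>log 2 (real s)\<rfloor>}))"
    using Es_sub by (intro card_mono) auto
  also have "\<dots> \<le> card ({1..s} \<times> {0..nat \<lfloor>log 2 (real s)\<rfloor>})" by (rule card_image_le) auto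
  also have "\<dots> = s * (nat \<lfloor>log 2 (real s)\<rfloor> + 1)" by (simp add: card_cartesian_product)
  finally have c: "real (card (Es s)) \<le> real s * (real (nat \<lfloor>log 2 (real s)\<rfloor>) + 1)"
    by (metis of_nat_le_iff of_nat_mult of_nat_add of_nat_1)
  have l0: "log 2 (real s) \<ge> 0" using s1 by simp
  have "real (nat \<lfloor>log 2 (real s)\<rfloor>) \<le> log 2 (real s)" using l0 by simp
  then have "real s * (real (nat \<lfloor>log 2 (real s)\<rfloor>) + 1) \<le> real s * (1 + log 2 (real s))"
    by (intro mult_left_mono) auto
  then show ?thesis using c by linarith
qed

end


context oco begin

lemma active_Es: "t \<le> s \<Longrightarrow> {J \<in> Es s. t \<in> J} = active t"
proof
  assume ts: "t \<le> s"
  show "active t \<subseteq> {J \<in> Es s. t \<in> J}"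
  proof
    fix J assume J: "J \<in> active t"
    then have Jg: "J \<in> geo_intervals" "t \<in> J" unfolding active_def by auto
    have "Min J \<le> t" using Jg geo_props(1)[OF Jg(1)] by simp
    then show "J \<in> {J \<in> Es s. t \<in> J}" using Jg ts unfolding Es_def by auto
  qed
qed (auto simp: Es_def active_def)

lemma pot_sum:
  assumes "1 \<le> t" "t \<le> s + 1"
  shows "(\<Sum>J\<in>Es s. anh_Phi (Rf J t) (Cf J t) - Bf J t) \<le> 0"
  using assms
proof (induction t)
  case 0 then show ?case by simp
next
  case (Suc t)
  show ?case
  proof (cases "t = 0")
    case True
    have "\<And>J. J \<in> Es s \<Longrightarrow> J \<inter> {..<Suc 0} = {}"
      using geo_mem_ge1 unfolding Es_def by fastforce
    then have "\<And>J. J \<in> Es s \<Longrightarrow> anh_Phi (Rf J (Suc 0)) (Cf J (Suc 0)) - Bf J (Suc 0) = 0"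
      unfolding Rf_def Cf_def Bf_def anh_Phi_def by simp
    then show ?thesis using True by simp
  next
    case False
    then have t1: "t \<ge> 1" and ts: "t \<le> s" using Suc.prems by auto
    have IH: "(\<Sum>J\<in>Es s. anh_Phi (Rf J t) (Cf J t) - Bf J t) \<le> 0" using Suc.IH t1 ts by simp
    have "(\<Sum>J\<in>Es s. anh_Phi (Rf J (Suc t)) (Cf J (Suc t)) - Bf J (Suc t))
        \<le> (\<Sum>J\<in>Es s. anh_Phi (Rf J t) (Cf J t) - Bf J t + (if t \<in> J then Wt J t * rr J t else 0))"
      by (intro sum_mono pot_step) (auto simp: Es_def)
    also have "\<dots> = (\<Sum>J\<in>Es s. anh_Phi (Rf J t) (Cf J t) - Bf J t) + (\<Sum>J\<in>Es s. (if t \<in> J then Wt J t * rr J t else 0))"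
      by (simp add: sum.distrib)
    also have "(\<Sum>J\<in>Es s. (if t \<in> J then Wt J t * rr J t else 0)) = (\<Sum>J\<in>{J \<in> Es s. t \<in> J}. Wt J t * rr J t)"
      by (rule sum.inter_filter[OF Es_finite, symmetric])
    also have "\<dots> = (\<Sum>J\<in>active t. Wt J t * rr J t)" using active_Es[OF ts] by simp
    finally show ?thesis using IH meta_neg[OF t1] by linarith
  qed
qed

lemma meta_J:
  assumes J0: "J0 \<in> geo_intervals" and le: "Min J0 + card J0 \<le> s + 1"
  shows "(\<Sum>u\<in>J0. rr J0 u) \<le> sqrt (3 * card J0 * ln (card (Es s) * (1 + 4 * ln (1 + real s))))"
proof -
  define t where "t = Min J0 + card J0"
  define X where "X = card (Es s) * (1 + 4 * ln (1 + real s))"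
  have t1: "t \<ge> 1" "t \<le> s + 1" unfolding t_def using geo_props(3)[OF J0] le by auto
  have e: "J0 = {Min J0..<Min J0 + card J0}" by (rule geo_props(4)[OF J0])
  have xt: "x < t" if "x \<in> J0" for x
  proof -
    have "x \<in> {Min J0..<Min J0 + card J0}" using that e by blast
    then show ?thesis unfolding t_def by simp
  qed
  have Jt: "J0 \<inter> {..<t} = J0" using xt by auto
  have inEs: "J0 \<in> Es s" unfolding Es_def using J0 le geo_props(5)[OF J0] by auto
  have "card (Es s) \<noteq> 0" using inEs Es_finite by auto
  then have cE: "card (Es s) \<ge> 1" by simp
  have l0: "ln (1 + real s) \<ge> 0" by simp
  have X1: "X \<ge> 1"
  proof -
    have a: "1 \<le> 1 + 4 * ln (1 + real s)" using l0 by simp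
    have b: "1 \<le> real (card (Es s))" using cE by simp
    have "1 * 1 \<le> real (card (Es s)) * (1 + 4 * ln (1 + real s))"
      using a b by (intro mult_mono) auto
    then show ?thesis unfolding X_def by simp
  qed
  have PhiX: "anh_Phi (Rf J0 t) (Cf J0 t) \<le> X"
  proof -
    have "anh_Phi (Rf J0 t) (Cf J0 t) \<le> (\<Sum>J\<in>Es s. anh_Phi (Rf J t) (Cf J t))"
      using inEs Es_finite by (intro member_le_sum) (auto simp: anh_Phi_def)
    also have "\<dots> \<le> (\<Sum>J\<in>Es s. Bf J t)" using pot_sum[OF t1] by (simp add: sum_subtractf)
    also have "\<dots> \<le> (\<Sum>J\<in>Es s. 1 + 4 * ln (1 + real s))"
      using t1 by (intro sum_mono Bf_bound) (auto simp: Es_def)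
    also have "\<dots> = X" unfolding X_def by simp
    finally show ?thesis .
  qed
  define R where "R = Rf J0 t"
  define C where "C = Cf J0 t"
  have Req: "R = (\<Sum>u\<in>J0. rr J0 u)" unfolding R_def Rf_def Jt ..
  have Cle: "C \<le> card J0" unfolding C_def using Cf_le(2)[OF J0, of t] Jt by simp
  have lnX: "ln X \<ge> 0" using X1 by simp
  show ?thesis
  proof (cases "R \<le> 0")
    case True
    have "0 \<le> sqrt (3 * card J0 * ln X)" using lnX by simp
    then show ?thesis using True Req unfolding X_def by linarith
  next
    case False
    then have Rp: "R > 0" by simp
    have Cp: "C > 0" using Rf_le_Cf[of J0 t] Rp unfolding R_def C_def by linarith
    have "exp (R^2 / (3 * C)) \<le> X" using PhiX Rp unfolding anh_Phi_def R_def C_def by (simp add: max_def)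
    then have "ln (exp (R^2 / (3 * C))) \<le> ln X" using X1 by (subst ln_le_cancel_iff) auto
    then have "R^2 / (3 * C) \<le> ln X" by simp
    then have "R^2 \<le> 3 * C * ln X" using Cp by (simp add: field_simps)
    also have "\<dots> \<le> 3 * card J0 * ln X" using Cle lnX by (intro mult_right_mono) auto
    finally have "R \<le> sqrt (3 * card J0 * ln X)" by (rule real_le_rsqrt)
    then show ?thesis using Req unfolding X_def by simp
  qed
qed

end


definition "beta_c = (245/100::real)"

lemma comb_sqrt:
  fixes m x :: real assumes "0 \<le> x" "x \<le> m"
  shows "sqrt m + beta_c * sqrt x \<le> beta_c * sqrt (m + x)"
proof -
  have m0: "m \<ge> 0" using assms by simp
  have sx: "sqrt x \<le> sqrt m" using assms by simp
  have smx: "sqrt m * sqrt x \<le> m"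
  proof -
    have "sqrt m * sqrt x \<le> sqrt m * sqrt m" using sx m0 by (intro mult_left_mono) auto
    then show ?thesis using m0 by simp
  qed
  have "(sqrt m + beta_c * sqrt x)^2 = m + 2*beta_c*(sqrt m * sqrt x) + beta_c^2 * x"
    using assms m0 by (simp add: power2_eq_square algebra_simps)
  also have "\<dots> \<le> m + 2*beta_c*m + beta_c^2 * x"
    using smx unfolding beta_c_def by simp
  also have "\<dots> \<le> beta_c^2 * (m + x)"
    using m0 unfolding beta_c_def by (simp add: algebra_simps power2_eq_square)
  finally have "(sqrt m + beta_c * sqrt x)^2 \<le> beta_c^2 * (m + x)" .
  then have "sqrt m + beta_c * sqrt x \<le> sqrt (beta_c^2 * (m + x))" by (rule real_le_rsqrt)
  also have "\<dots> = beta_c * sqrt (m + x)" unfolding beta_c_def by (simp add: real_sqrt_mult)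
  finally show ?thesis .
qed

lemma cs_sqrt:
  fixes x1 y1 x2 y2 :: real
  assumes "0 \<le> x1" "0 \<le> y1" "0 \<le> x2" "0 \<le> y2"
  shows "sqrt (x1*y1) + sqrt (x2*y2) \<le> sqrt ((x1+x2)*(y1+y2))"
proof -
  have am: "sqrt ((x1*y2)*(x2*y1)) \<le> (x1*y2 + x2*y1)/2"
    using assms by (intro arith_geo_mean_sqrt) auto
  have "sqrt (x1*y1) * sqrt (x2*y2) = sqrt ((x1*y2)*(x2*y1))"
    by (simp add: real_sqrt_mult[symmetric] algebra_simps)
  then have "(sqrt (x1*y1) + sqrt (x2*y2))^2 = x1*y1 + x2*y2 + 2* sqrt ((x1*y2)*(x2*y1))"
    using assms by (simp add: power2_eq_square algebra_simps)
  also have "\<dots> \<le> (x1+x2)*(y1+y2)" using am by (simp add: algebra_simps)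
  finally show ?thesis by (rule real_le_rsqrt)
qed

lemma step_comb:
  fixes A B m n' P1 P2 S1 S2 :: real
  assumes A: "A \<ge> 0" and B: "B \<ge> 0" and n': "0 \<le> n'" "n' \<le> m" and P: "P1 \<ge> 0" "P2 \<ge> 0"
    and h1: "S1 \<le> A * sqrt m + B * sqrt (m * P1)"
    and h2: "S2 \<le> beta_c * A * sqrt n' + B * sqrt (n' * P2)"
  shows "S1 + S2 \<le> beta_c * A * sqrt (m + n') + B * sqrt ((m + n') * (P1 + P2))"
proof -
  have "A * (sqrt m + beta_c * sqrt n') \<le> A * (beta_c * sqrt (m + n'))"
    using comb_sqrt[OF n'] A by (intro mult_left_mono) auto
  moreover have "B * (sqrt (m * P1) + sqrt (n' * P2)) \<le> B * sqrt ((m + n') * (P1 + P2))"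
    using cs_sqrt[of m P1 n' P2] n' P B by (intro mult_left_mono) auto
  ultimately show ?thesis using h1 h2 by (simp add: algebra_simps)
qed

lemma top_pow: "n \<ge> 1 \<Longrightarrow> \<exists>j. (2::nat)^j \<le> n \<and> n < 2 * 2^j"
  using ex_power_ivl1[of 2 n] by auto

lemma dvd_small_pow:
  assumes "(2::nat)^j' \<le> n'" "n' < 2^j"
  shows "(2::nat)^j' dvd 2^j"
proof -
  have "(2::nat)^j' < 2^j" using assms by (rule le_less_trans)
  then have "j' < j" using power_less_imp_less_exp[of "2::nat" j' j] by simp
  then show ?thesis by (simp add: le_imp_power_dvd)
qed

locale cover =
  fixes h p :: "nat \<Rightarrow> real" and A B :: real and r s :: nat
  assumes A: "A \<ge> 0" and B: "B \<ge> 0" and p0: "\<And>t. p t \<ge> 0"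
    and hyp: "\<And>a k. 1 \<le> a \<Longrightarrow> r \<le> a \<Longrightarrow> a + 2^k \<le> s + 1 \<Longrightarrow> 2^k dvd a \<Longrightarrow>
       (\<Sum>t\<in>{a..<a+2^k}. h t) \<le> A * sqrt (2^k) + B * sqrt (2^k * (\<Sum>t\<in>{a..<a+2^k}. p t))"
begin

lemma psum0: "(\<Sum>t\<in>X. p t) \<ge> 0" by (simp add: sum_nonneg p0)

lemma right_part:
  "r \<le> a \<Longrightarrow> a + n \<le> s + 1 \<Longrightarrow> 1 \<le> a \<Longrightarrow> (\<forall>j. 2^j \<le> n \<longrightarrow> 2^j dvd a) \<Longrightarrow>
   (\<Sum>t\<in>{a..<a+n}. h t) \<le> beta_c * A * sqrt n + B * sqrt (n * (\<Sum>t\<in>{a..<a+n}. p t))"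
proof (induction n arbitrary: a rule: less_induct)
  case (less n)
  show ?case
  proof (cases "n = 0")
    case True then show ?thesis by simp
  next
    case False
    then obtain j where j: "(2::nat)^j \<le> n" "n < 2 * 2^j" using top_pow[of n] by auto
    define m where "m = (2::nat)^j"
    define n' where "n' = n - m"
    have mn: "m \<le> n" "n' < m" "n = m + n'" unfolding m_def n'_def using j by auto
    have dva: "2^j dvd a" using less.prems(4) j by auto
    have blk: "(\<Sum>t\<in>{a..<a+m}. h t) \<le> A * sqrt m + B * sqrt (m * (\<Sum>t\<in>{a..<a+m}. p t))"
      using hyp[of a j] less.prems dva mn unfolding m_def by auto
    have rest: "(\<Sum>t\<in>{a+m..<(a+m)+n'}. h t) \<le> beta_c * A * sqrt n' + B * sqrt (n' * (\<Sum>t\<in>{a+m..<(a+m)+n'}. p t))"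
    proof (rule less.IH)
      show "n' < n" using mn m_def by simp
      show "r \<le> a + m" "a + m + n' \<le> s + 1" "1 \<le> a + m" using less.prems mn by auto
      show "\<forall>j'. 2^j' \<le> n' \<longrightarrow> 2^j' dvd a + m"
      proof (intro allI impI)
        fix j' assume "(2::nat)^j' \<le> n'"
        moreover have "n' < 2^j" using mn m_def by simp
        ultimately have d: "(2::nat)^j' dvd 2^j" by (rule dvd_small_pow)
        have "(2::nat)^j' dvd a" using d dva by (rule dvd_trans)
        then show "2^j' dvd a + m" using d unfolding m_def by simp
      qed
    qed
    have sh: "(\<Sum>t\<in>{a..<a+n}. h t) = (\<Sum>t\<in>{a..<a+m}. h t) + (\<Sum>t\<in>{a+m..<(a+m)+n'}. h t)"
      using mn by (simp add: sum.atLeastLessThan_concat add.assoc)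
    have sp: "(\<Sum>t\<in>{a..<a+n}. p t) = (\<Sum>t\<in>{a..<a+m}. p t) + (\<Sum>t\<in>{a+m..<(a+m)+n'}. p t)"
      using mn by (simp add: sum.atLeastLessThan_concat add.assoc)
    have "(\<Sum>t\<in>{a..<a+m}. h t) + (\<Sum>t\<in>{a+m..<(a+m)+n'}. h t)
        \<le> beta_c * A * sqrt (real m + real n') + B * sqrt ((real m + real n') * ((\<Sum>t\<in>{a..<a+m}. p t) + (\<Sum>t\<in>{a+m..<(a+m)+n'}. p t)))"
      using mn by (intro step_comb[OF A B _ _ psum0 psum0 blk rest]) auto
    then show ?thesis using sh sp mn by simp
  qed
qed

lemma left_part:
  "r \<le> b - n \<Longrightarrow> n < b \<Longrightarrow> b \<le> s + 1 \<Longrightarrow> (\<forall>j. 2^j \<le> n \<longrightarrow> 2^j dvd b) \<Longrightarrow>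
   (\<Sum>t\<in>{b-n..<b}. h t) \<le> beta_c * A * sqrt n + B * sqrt (n * (\<Sum>t\<in>{b-n..<b}. p t))"
proof (induction n arbitrary: b rule: less_induct)
  case (less n)
  show ?case
  proof (cases "n = 0")
    case True then show ?thesis by simp
  next
    case False
    then obtain j where j: "(2::nat)^j \<le> n" "n < 2 * 2^j" using top_pow[of n] by auto
    define m where "m = (2::nat)^j"
    define n' where "n' = n - m"
    have mn: "m \<le> n" "n' < m" "n = m + n'" unfolding m_def n'_def using j by auto
    have dvb: "2^j dvd b" using less.prems(4) j by auto
    have dvbm: "2^j dvd b - m" using dvb unfolding m_def by (simp add: dvd_diff_nat)
    have eb: "b - m + 2^j = b" using mn less.prems unfolding m_def by simp
    have blk: "(\<Sum>t\<in>{b-m..<b}. h t) \<le> A * sqrt m + B * sqrt (m * (\<Sum>t\<in>{b-m..<b}. p t))"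
      using hyp[of "b - m" j] less.prems dvbm mn eb unfolding m_def by auto
    have rest: "(\<Sum>t\<in>{(b-m)-n'..<b-m}. h t) \<le> beta_c * A * sqrt n' + B * sqrt (n' * (\<Sum>t\<in>{(b-m)-n'..<b-m}. p t))"
    proof (rule less.IH)
      show "n' < n" using mn m_def by simp
      show "r \<le> b - m - n'" "n' < b - m" "b - m \<le> s + 1" using less.prems mn by auto
      show "\<forall>j'. 2^j' \<le> n' \<longrightarrow> 2^j' dvd b - m"
      proof (intro allI impI)
        fix j' assume "(2::nat)^j' \<le> n'"
        moreover have "n' < 2^j" using mn m_def by simp
        ultimately have d: "(2::nat)^j' dvd 2^j" by (rule dvd_small_pow)
        show "2^j' dvd b - m" using dvd_trans[OF d dvbm] .
      qed
    qed
    have e1: "b - m - n' = b - n" using mn by simp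
    have sh: "(\<Sum>t\<in>{b-n..<b}. h t) = (\<Sum>t\<in>{(b-m)-n'..<b-m}. h t) + (\<Sum>t\<in>{b-m..<b}. h t)"
      unfolding e1 using mn less.prems by (intro sum.atLeastLessThan_concat[symmetric]) auto
    have sp: "(\<Sum>t\<in>{b-n..<b}. p t) = (\<Sum>t\<in>{(b-m)-n'..<b-m}. p t) + (\<Sum>t\<in>{b-m..<b}. p t)"
      unfolding e1 using mn less.prems by (intro sum.atLeastLessThan_concat[symmetric]) auto
    have "(\<Sum>t\<in>{b-m..<b}. h t) + (\<Sum>t\<in>{(b-m)-n'..<b-m}. h t)
        \<le> beta_c * A * sqrt (real m + real n') + B * sqrt ((real m + real n') * ((\<Sum>t\<in>{b-m..<b}. p t) + (\<Sum>t\<in>{(b-m)-n'..<b-m}. p t)))"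
      using mn by (intro step_comb[OF A B _ _ psum0 psum0 blk rest]) auto
    then show ?thesis using sh sp mn by (simp add: add.commute)
  qed
qed

end


lemma split_point:
  fixes r s :: nat
  assumes r1: "r \<ge> 1" and rs: "r \<le> s + 1"
  shows "\<exists>c. r \<le> c \<and> c \<le> s + 1 \<and> (\<forall>j. 2^j \<le> c - r \<longrightarrow> 2^j dvd c) \<and> (\<forall>j. 2^j \<le> s + 1 - c \<longrightarrow> 2^j dvd c)"
proof -
  define S where "S = {m::nat. \<exists>c. r \<le> c \<and> c \<le> s + 1 \<and> 2^m dvd c}"
  have S0: "0 \<in> S" unfolding S_def using rs by auto
  have Sb: "S \<subseteq> {..s+1}"
  proof
    fix m assume "m \<in> S"
    then obtain c where c: "r \<le> c" "c \<le> s + 1" "2^m dvd c" unfolding S_def by auto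
    have "c > 0" using c r1 by simp
    then have "2^m \<le> c" using c(3) by (rule dvd_imp_le[rotated])
    moreover have "m < 2^m" by (rule less_exp)
    ultimately have "m \<le> s + 1" using c by linarith
    then show "m \<in> {..s+1}" by simp
  qed
  have fin: "finite S" using Sb finite_subset by blast
  define m0 where "m0 = Max S"
  have m0S: "m0 \<in> S" unfolding m0_def using fin S0 by (intro Max_in) auto
  have mx: "\<And>m. m \<in> S \<Longrightarrow> m \<le> m0" unfolding m0_def using fin by simp
  obtain c where c: "r \<le> c" "c \<le> s + 1" "2^m0 dvd c" using m0S unfolding S_def by auto
  define M where "M = (2::nat)^(m0+1)"
  have Mp: "M > 0" unfolding M_def by simp
  have small: "2^j dvd c" if "\<not> (M \<le> 2^j)" for j
  proof -
    have "(2::nat)^j < 2^(m0+1)" using that unfolding M_def by simp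
    then have "j \<le> m0" using power_less_imp_less_exp[of "2::nat" j "m0+1"] by simp
    then have "(2::nat)^j dvd 2^m0" by (simp add: le_imp_power_dvd)
    then show ?thesis using c(3) by (rule dvd_trans)
  qed
  have notS: "m0 + 1 \<notin> S" using mx by fastforce
  have L: "\<forall>j. 2^j \<le> c - r \<longrightarrow> 2^j dvd c"
  proof (intro allI impI)
    fix j assume j: "2^j \<le> c - r"
    show "2^j dvd c"
    proof (rule ccontr)
      assume nd: "\<not> 2^j dvd c"
      then have "M \<le> 2^j" using small by blast
      then have Mc: "M \<le> c - r" using j by simp
      define c' where "c' = c - c mod M"
      have "c mod M < M" using Mp by simp
      then have "r \<le> c'" unfolding c'_def using Mc c by linarith
      moreover have "c' \<le> s + 1" unfolding c'_def using c by simp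
      moreover have "M dvd c'" unfolding c'_def by (simp add: minus_mod_eq_mult_div)
      ultimately have "m0 + 1 \<in> S" unfolding S_def M_def by blast
      then show False using notS by simp
    qed
  qed
  have R: "\<forall>j. 2^j \<le> s + 1 - c \<longrightarrow> 2^j dvd c"
  proof (intro allI impI)
    fix j assume j: "2^j \<le> s + 1 - c"
    show "2^j dvd c"
    proof (rule ccontr)
      assume nd: "\<not> 2^j dvd c"
      then have "M \<le> 2^j" using small by blast
      then have Mc: "M \<le> s + 1 - c" using j by simp
      define c' where "c' = c - c mod M + M"
      have "c mod M < M" using Mp by simp
      moreover have "c mod M \<le> c" by simp
      ultimately have "r \<le> c'" "c' \<le> s + 1" unfolding c'_def using Mc c by linarith+
      moreover have "M dvd c'" unfolding c'_def by (simp add: minus_mod_eq_mult_div)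
      ultimately have "m0 + 1 \<in> S" unfolding S_def M_def by blast
      then show False using notS by simp
    qed
  qed
  show ?thesis using c L R by blast
qed

context cover begin

lemma full_cover:
  assumes r1: "r \<ge> 1" and rs: "r \<le> s"
  shows "(\<Sum>t\<in>{r..<s+1}. h t) \<le> beta_c * sqrt 2 * A * sqrt (real (s + 1 - r))
           + B * sqrt (real (s + 1 - r) * (\<Sum>t\<in>{r..<s+1}. p t))"
proof -
  obtain c where c: "r \<le> c" "c \<le> s + 1" "\<forall>j. 2^j \<le> c - r \<longrightarrow> 2^j dvd c" "\<forall>j. 2^j \<le> s + 1 - c \<longrightarrow> 2^j dvd c"
    using split_point[OF r1, of s] rs by auto
  define n1 where "n1 = c - r"
  define n2 where "n2 = s + 1 - c"
  have lp: "(\<Sum>t\<in>{c-n1..<c}. h t) \<le> beta_c * A * sqrt n1 + B * sqrt (n1 * (\<Sum>t\<in>{c-n1..<c}. p t))"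
    using c r1 unfolding n1_def by (intro left_part) simp_all
  have rp: "(\<Sum>t\<in>{c..<c+n2}. h t) \<le> beta_c * A * sqrt n2 + B * sqrt (n2 * (\<Sum>t\<in>{c..<c+n2}. p t))"
    using c r1 unfolding n2_def by (intro right_part) simp_all
  have e1: "c - n1 = r" "c + n2 = s + 1" unfolding n1_def n2_def using c by auto
  have nn: "real (s + 1 - r) = real n1 + real n2" unfolding n1_def n2_def using c by auto
  have sh: "(\<Sum>t\<in>{r..<s+1}. h t) = (\<Sum>t\<in>{r..<c}. h t) + (\<Sum>t\<in>{c..<s+1}. h t)"
    using sum.atLeastLessThan_concat[of r c "s+1" h] c by simp
  have sp: "(\<Sum>t\<in>{r..<s+1}. p t) = (\<Sum>t\<in>{r..<c}. p t) + (\<Sum>t\<in>{c..<s+1}. p t)"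
    using sum.atLeastLessThan_concat[of r c "s+1" p] c by simp
  have a1: "beta_c * A * sqrt n1 + beta_c * A * sqrt n2 \<le> beta_c * sqrt 2 * A * sqrt (real n1 + real n2)"
  proof -
    have "sqrt (real n1 * 1) + sqrt (real n2 * 1) \<le> sqrt ((real n1 + real n2) * (1 + 1))"
      by (intro cs_sqrt) auto
    moreover have "sqrt ((real n1 + real n2) * (1 + 1)) = sqrt (real n1 + real n2) * sqrt 2"
      by (simp only: one_add_one real_sqrt_mult)
    ultimately have "sqrt (real n1) + sqrt (real n2) \<le> sqrt 2 * sqrt (real n1 + real n2)"
      by (simp add: mult.commute)
    then have "(beta_c * A) * (sqrt (real n1) + sqrt (real n2)) \<le> (beta_c * A) * (sqrt 2 * sqrt (real n1 + real n2))"
      using A unfolding beta_c_def by (intro mult_left_mono) auto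
    then show ?thesis by (simp add: algebra_simps)
  qed
  have b1: "B * sqrt (n1 * (\<Sum>t\<in>{r..<c}. p t)) + B * sqrt (n2 * (\<Sum>t\<in>{c..<s+1}. p t))
      \<le> B * sqrt ((real n1 + real n2) * ((\<Sum>t\<in>{r..<c}. p t) + (\<Sum>t\<in>{c..<s+1}. p t)))"
  proof -
    have "sqrt (n1 * (\<Sum>t\<in>{r..<c}. p t)) + sqrt (n2 * (\<Sum>t\<in>{c..<s+1}. p t))
        \<le> sqrt ((real n1 + real n2) * ((\<Sum>t\<in>{r..<c}. p t) + (\<Sum>t\<in>{c..<s+1}. p t)))"
      by (intro cs_sqrt psum0) auto
    then have "B * (sqrt (n1 * (\<Sum>t\<in>{r..<c}. p t)) + sqrt (n2 * (\<Sum>t\<in>{c..<s+1}. p t)))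
        \<le> B * sqrt ((real n1 + real n2) * ((\<Sum>t\<in>{r..<c}. p t) + (\<Sum>t\<in>{c..<s+1}. p t)))"
      using B by (rule mult_left_mono)
    then show ?thesis by (simp only: distrib_left)
  qed
  have lp': "(\<Sum>t\<in>{r..<c}. h t) \<le> beta_c * A * sqrt n1 + B * sqrt (n1 * (\<Sum>t\<in>{r..<c}. p t))"
    using lp unfolding e1 .
  have rp': "(\<Sum>t\<in>{c..<s+1}. h t) \<le> beta_c * A * sqrt n2 + B * sqrt (n2 * (\<Sum>t\<in>{c..<s+1}. p t))"
    using rp unfolding e1 .
  have "(\<Sum>t\<in>{r..<s+1}. h t) \<le> beta_c * sqrt 2 * A * sqrt (real n1 + real n2)
      + B * sqrt ((real n1 + real n2) * ((\<Sum>t\<in>{r..<c}. p t) + (\<Sum>t\<in>{c..<s+1}. p t)))"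
    using lp' rp' sh a1 b1 by linarith
  then show ?thesis unfolding nn sp .
qed

end


lemma sum_shift_ivl: "(\<Sum>t\<in>{a..<a+L}. F t) = (\<Sum>k<L. F (a+k))" for a L :: nat
  by (induction L) (simp_all add: add.commute)

lemma k_I_mono:
  assumes D: "D > 0" and P: "0 \<le> P" "P \<le> P'"
  shows "k_I P D \<le> k_I P' D"
proof -
  have "1 + 4*P/(7*D) \<le> 1 + 4*P'/(7*D)" using D P by (simp add: divide_right_mono)
  moreover have "1 + 4*P/(7*D) > 0" using D P by (simp add: add_pos_nonneg)
  ultimately have "log 2 (1 + 4*P/(7*D)) \<le> log 2 (1 + 4*P'/(7*D))" by simp
  then have "log 2 (1 + 4*P/(7*D)) / 2 \<le> log 2 (1 + 4*P'/(7*D)) / 2" by simp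
  then show ?thesis unfolding k_I_def by (intro add_right_mono floor_mono)
qed

lemma k_I_pos:
  assumes D: "D > 0" and P: "0 \<le> P"
  shows "k_I P D \<ge> 1"
proof -
  have "1 + 4*P/(7*D) \<ge> 1" using D P by simp
  then have "log 2 (1 + 4*P/(7*D)) / 2 \<ge> 0" by simp
  then show ?thesis unfolding k_I_def by simp
qed

context oco begin

lemma regret_J:
  fixes u :: "nat \<Rightarrow> 'a" and r s :: nat and Pbig :: real
  assumes J: "J \<in> geo_intervals" and rJ: "r \<le> Min J" and sJ: "Min J + card J \<le> s + 1"
    and uin: "\<forall>t\<in>{r..s+1}. u t \<in> \<Omega>"
    and Pb: "(\<Sum>t\<in>J. norm (u (t+1) - u t)) \<le> Pbig"
  shows "(\<Sum>t\<in>J. f t (wp t) - f t (u t))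
     \<le> (sqrt (3 * ln (card (Es s) * (1 + 4 * ln (1 + real s)))) + ln (real_of_int (k_I Pbig D) + 1) + sqrt 2 + 3*D*G)
          * sqrt (card J) + 3 * G * sqrt D * sqrt (card J * (\<Sum>t\<in>J. norm (u (t+1) - u t)))"
proof -
  define a where "a = Min J"
  define L where "L = card J"
  define X where "X = card (Es s) * (1 + 4 * ln (1 + real s))"
  define PJ where "PJ = (\<Sum>t\<in>J. norm (u (t+1) - u t))"
  have Jeq: "J = {a..<a+L}" unfolding a_def L_def by (rule geo_props(4)[OF J])
  have a1: "a \<ge> 1" unfolding a_def by (rule geo_props(3)[OF J])
  have L0: "L > 0" unfolding L_def using geo_props(5)[OF J] by simp
  have PJ0: "PJ \<ge> 0" unfolding PJ_def by (simp add: sum_nonneg)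
  have PJeq: "PJ = (\<Sum>k<L. norm (u (a+k+1) - u (a+k)))"
    unfolding PJ_def by (subst Jeq) (simp add: sum_shift_ivl)
  have split: "(\<Sum>t\<in>J. f t (wp t) - f t (u t)) = (\<Sum>t\<in>J. rr J t) + (\<Sum>t\<in>J. f t (ep J t) - f t (u t))"
    unfolding rr_def by (simp add: sum.distrib[symmetric])
  have meta: "(\<Sum>t\<in>J. rr J t) \<le> sqrt (3 * ln X) * sqrt L"
  proof -
    have "(\<Sum>t\<in>J. rr J t) \<le> sqrt (3 * card J * ln X)" unfolding X_def
      by (rule meta_J[OF J sJ])
    also have "\<dots> = sqrt (3 * ln X) * sqrt L" unfolding L_def by (simp add: real_sqrt_mult[symmetric] algebra_simps)
    finally show ?thesis .
  qed
  have ep_eq: "ep J (a+k) = ader_play f g \<Omega> D G L a (x0 J) k" for k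
    unfolding ep_def expert_play_def a_def L_def by simp
  have uin': "\<forall>k\<le>L. u (a+k) \<in> \<Omega>" using uin rJ sJ unfolding a_def L_def by auto
  have y0: "\<forall>i\<ge>1. x0 J i \<in> \<Omega>" using x0in J by auto
  have ader: "(\<Sum>k<L. f (a+k) (ader_play f g \<Omega> D G L a (x0 J) k) - f (a+k) (u (a+k)))
     \<le> sqrt L * (ln (real (nat (k_I PJ D)) + 1) + sqrt 2 + 3*D*G) + 3*G* sqrt (D*PJ)* sqrt L"
    unfolding PJeq by (rule ader_regret[OF a1 L0 y0 uin'])
  have second: "(\<Sum>t\<in>J. f t (ep J t) - f t (u t))
     = (\<Sum>k<L. f (a+k) (ader_play f g \<Omega> D G L a (x0 J) k) - f (a+k) (u (a+k)))"
    by (subst Jeq) (simp add: sum_shift_ivl ep_eq)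
  have kk: "ln (real (nat (k_I PJ D)) + 1) \<le> ln (real_of_int (k_I Pbig D) + 1)"
  proof -
    have k1: "k_I PJ D \<ge> 1" by (rule k_I_pos[OF Dp PJ0])
    have "k_I PJ D \<le> k_I Pbig D" using k_I_mono[OF Dp PJ0] Pb unfolding PJ_def by simp
    then have "real (nat (k_I PJ D)) + 1 \<le> real_of_int (k_I Pbig D) + 1" using k1 by simp
    then show ?thesis using k1 by simp
  qed
  have sq: "3*G* sqrt (D*PJ)* sqrt L = 3 * G * sqrt D * sqrt (L * PJ)"
    by (simp add: real_sqrt_mult)
  have "(\<Sum>t\<in>J. f t (wp t) - f t (u t))
      \<le> sqrt (3 * ln X) * sqrt L + sqrt L * (ln (real_of_int (k_I Pbig D) + 1) + sqrt 2 + 3*D*G) + 3 * G * sqrt D * sqrt (L * PJ)"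
  proof -
    have "sqrt L * (ln (real (nat (k_I PJ D)) + 1) + sqrt 2 + 3*D*G)
        \<le> sqrt L * (ln (real_of_int (k_I Pbig D) + 1) + sqrt 2 + 3*D*G)"
      using kk by (intro mult_left_mono) auto
    then show ?thesis using split meta ader second sq by linarith
  qed
  then show ?thesis unfolding X_def L_def PJ_def by (simp add: algebra_simps)
qed

end


lemma final_arith:
  fixes c lX lk DG :: real
  assumes c1: "c \<ge> 1" and l0: "0 \<le> lX" and l2: "lX \<le> 2 * c" and lk: "lk \<ge> 0" and DG: "DG \<ge> 0"
  shows "beta_c * sqrt 2 * (sqrt (3 * lX) + lk + sqrt 2 + 3 * DG) \<le> 14 * sqrt c + 3 * (1 + 2 * lk) + 23 * DG"
proof -
  define \<kappa> where "\<kappa> = beta_c * sqrt 2"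
  have k0: "\<kappa> \<ge> 0" unfolding \<kappa>_def beta_c_def by simp
  have k72: "\<kappa> \<le> 7/2"
  proof -
    have "\<kappa> = sqrt (beta_c^2 * 2)" unfolding \<kappa>_def beta_c_def by (simp add: real_sqrt_mult)
    also have "\<dots> \<le> sqrt ((7/2)^2)" unfolding beta_c_def by (simp add: power2_eq_square)
    also have "\<dots> = 7/2" by simp
    finally show ?thesis .
  qed
  have sc: "sqrt c \<ge> 1" using c1 by simp
  have t1: "\<kappa> * sqrt (3 * lX) \<le> 35/4 * sqrt c"
  proof -
    have "sqrt (3 * lX) \<le> sqrt (6 * c)" using l2 by simp
    also have "\<dots> = sqrt 6 * sqrt c" by (simp add: real_sqrt_mult)
    also have "\<dots> \<le> 5/2 * sqrt c"
    proof -
      have "sqrt (6::real) \<le> 5/2" by (rule real_le_lsqrt) (auto simp: power2_eq_square)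
      then show ?thesis using c1 by (intro mult_right_mono) auto
    qed
    finally have "sqrt (3 * lX) \<le> 5/2 * sqrt c" .
    then have "\<kappa> * sqrt (3 * lX) \<le> 7/2 * (5/2 * sqrt c)"
      using k0 k72 l0 by (intro mult_mono) auto
    then show ?thesis by simp
  qed
  have t2: "\<kappa> * lk \<le> 6 * lk" using k72 lk by (intro mult_right_mono) auto
  have t3: "\<kappa> * sqrt 2 \<le> 3 + 21/4 * sqrt c"
  proof -
    have "\<kappa> * sqrt 2 = beta_c * 2" unfolding \<kappa>_def by (simp add: mult.assoc)
    also have "\<dots> \<le> 3 + 21/4" unfolding beta_c_def by simp
    also have "\<dots> \<le> 3 + 21/4 * sqrt c" using sc by simp
    finally show ?thesis .
  qed
  have "\<kappa> * (3 * DG) \<le> 7/2 * (3 * DG)" using k72 DG by (intro mult_right_mono) auto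
  then have t4: "\<kappa> * (3 * DG) \<le> 23 * DG" using DG by linarith
  have "beta_c * sqrt 2 * (sqrt (3 * lX) + lk + sqrt 2 + 3 * DG)
      = \<kappa> * sqrt (3 * lX) + \<kappa> * lk + \<kappa> * sqrt 2 + \<kappa> * (3 * DG)"
    unfolding \<kappa>_def by (simp add: algebra_simps)
  also have "\<dots> \<le> 35/4 * sqrt c + 6 * lk + (3 + 21/4 * sqrt c) + 23 * DG"
    using t1 t2 t3 t4 by (intro add_mono) auto
  also have "\<dots> = 14 * sqrt c + 3 * (1 + 2 * lk) + 23 * DG" by (simp add: algebra_simps)
  finally show ?thesis .
qed

context oco begin

lemma lnX_bound:
  assumes s1: "s \<ge> 1"
  shows "ln (card (Es s) * (1 + 4 * ln (1 + real s))) \<le> 2 * c_prime s"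
    and "0 \<le> ln (card (Es s) * (1 + 4 * ln (1 + real s)))"
    and "c_prime s \<ge> 1"
proof -
  define L where "L = ln (1 + real s)"
  have L0: "L \<ge> 0" unfolding L_def by simp
  define J1 where "J1 = {1..<1+2^0::nat}"
  have g1: "J1 \<in> geo_intervals" unfolding J1_def by (rule geo_I) auto
  have m1: "Min J1 = 1" unfolding J1_def by simp
  have "J1 \<in> Es s" unfolding Es_def using s1 g1 m1 by simp
  then have "card (Es s) \<noteq> 0" using Es_finite by auto
  then have cE: "real (card (Es s)) \<ge> 1" by simp
  have ls: "ln (real s) \<ge> 0" using s1 by simp
  have lg: "log 2 (real s) \<ge> 0" using s1 by simp
  have l1: "ln (1 + log 2 (real s)) \<ge> 0" using lg by simp
  have l2: "ln ((5 + 3 * L) / 2) \<ge> 0" using L0 by simp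
  show c1: "c_prime s \<ge> 1" unfolding c_prime_def L_def[symmetric] using ls l1 l2 by linarith
  have B1: "1 + 4 * L \<ge> 1" using L0 by simp
  have e0: "ln (card (Es s) * (1 + 4 * L)) = ln (card (Es s)) + ln (1 + 4 * L)"
    using cE B1 by (simp add: ln_mult)
  have e1: "ln (card (Es s)) \<le> ln (real s * (1 + log 2 (real s)))"
    using Es_card[OF s1] cE by simp
  have e2: "ln (real s * (1 + log 2 (real s))) = ln (real s) + ln (1 + log 2 (real s))"
  proof -
    have "real s > 0" using s1 by simp
    moreover have "1 + log 2 (real s) > 0" using lg by linarith
    ultimately show ?thesis by (simp add: ln_mult)
  qed
  have e3: "ln (1 + 4 * L) \<le> ln (4 * ((5 + 3 * L) / 2))" using L0 B1 by simp
  have e4: "ln (4 * ((5 + 3 * L) / 2)) = ln 4 + ln ((5 + 3 * L) / 2)"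
  proof -
    have "(5 + 3 * L) / 2 > 0" using L0 by simp
    then show ?thesis by (subst ln_mult) auto
  qed
  have e5: "ln (4::real) = 2 * ln 2" using ln_realpow[of 2 2] by simp
  have "ln (card (Es s) * (1 + 4 * L)) \<le> ln (real s) + ln (1 + log 2 (real s)) + (2 * ln 2 + ln ((5 + 3 * L) / 2))"
    using e0 e1 e2 e3 e4 e5 by linarith
  moreover have "ln (2::real) < 1" by (rule ln_2_less_1)
  ultimately have "ln (card (Es s) * (1 + 4 * L)) \<le> c_prime s + 1" unfolding c_prime_def L_def by linarith
  then show "ln (card (Es s) * (1 + 4 * ln (1 + real s))) \<le> 2 * c_prime s" using c1 unfolding L_def by linarith
  have "1 * 1 \<le> real (card (Es s)) * (1 + 4 * L)" using cE B1 by (intro mult_mono) auto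
  then show "0 \<le> ln (card (Es s) * (1 + 4 * ln (1 + real s)))" unfolding L_def by simp
qed

end

theorem theorem5:
  fixes \<Omega> :: "'a::euclidean_space set"
    and f :: "nat \<Rightarrow> 'a \<Rightarrow> real" and g :: "nat \<Rightarrow> 'a \<Rightarrow> 'a"
    and D G :: real
    and x0 :: "nat set \<Rightarrow> nat \<Rightarrow> 'a"
    and u :: "nat \<Rightarrow> 'a" and r s :: nat
  assumes "convex \<Omega>" and "closed \<Omega>"
    and "0 \<in> \<Omega>" and "\<forall>x\<in>\<Omega>. \<forall>y\<in>\<Omega>. norm (x - y) \<le> D"
    and "D > 0" and "G > 0"
    and "\<forall>t\<ge>1. convex_on \<Omega> (f t)"
    and "\<forall>t\<ge>1. \<forall>w\<in>\<Omega>. (f t has_derivative (\<lambda>h. g t w \<bullet> h)) (at w within \<Omega>)"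
    and "\<forall>t\<ge>1. \<forall>w\<in>\<Omega>. norm (g t w) \<le> G"
    and "\<forall>t\<ge>1. \<forall>w\<in>\<Omega>. 0 \<le> f t w \<and> f t w \<le> 1"
    and "\<forall>J\<in>geo_intervals. \<forall>i\<ge>1. x0 J i \<in> \<Omega>"
    and "1 \<le> r" and "r \<le> s"
    and "\<forall>t\<in>{r..s+1}. u t \<in> \<Omega>"
  shows "(\<Sum>t = r..s. f t (aoa f g \<Omega> D G x0 t)) - (\<Sum>t = r..s. f t (u t))
      \<le> (14 * sqrt (c_prime s) + 3 * (1 + 2 * ln (real_of_int (k_I (path_length u r s) D) + 1)) + 23 * D * G)
           * sqrt (real (s - r + 1))
        + 5 * G * sqrt (D * path_length u r s) * sqrt (real (s - r + 1))"
proof -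
  note as = assms
  interpret oco \<Omega> f g D G x0
    by unfold_locales (use as in auto)
  have r1: "r \<ge> 1" and rs: "r \<le> s" and uin: "\<forall>t\<in>{r..s+1}. u t \<in> \<Omega>" using as by auto
  have s1: "s \<ge> 1" using r1 rs by simp
  define P where "P = path_length u r s"
  define X where "X = card (Es s) * (1 + 4 * ln (1 + real s))"
  define KI where "KI = k_I P D"
  define A where "A = sqrt (3 * ln X) + ln (real_of_int KI + 1) + sqrt 2 + 3*D*G"
  define B where "B = 3 * G * sqrt D"
  define h where "h = (\<lambda>t. f t (wp t) - f t (u t))"
  define p where "p = (\<lambda>t. norm (u (t+1) - u t))"
  have Peq: "P = (\<Sum>t\<in>{r..<s+1}. p t)" unfolding P_def path_length_def p_def
    by (simp add: atLeastLessThanSuc_atLeastAtMost)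
  have P0: "P \<ge> 0" unfolding P_def path_length_def by (simp add: sum_nonneg)
  have lX: "0 \<le> ln X" "ln X \<le> 2 * c_prime s" "c_prime s \<ge> 1" using lnX_bound[OF s1] unfolding X_def by auto
  have KI1: "KI \<ge> 1" unfolding KI_def using k_I_pos[OF Dp P0] .
  have lk: "ln (real_of_int KI + 1) \<ge> 0" using KI1 by simp
  have A0: "A \<ge> 0" unfolding A_def using lX lk Dp Gp by simp
  have B0: "B \<ge> 0" unfolding B_def using Gp Dp by simp
  interpret cv: cover h p A B r s
  proof
    show "A \<ge> 0" "B \<ge> 0" by (fact A0, fact B0)
    show "\<And>t. p t \<ge> 0" unfolding p_def by simp
    fix a k assume a: "1 \<le> a" "r \<le> a" "a + 2^k \<le> s + 1" "2^k dvd a"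
    define J where "J = {a..<a + 2^k}"
    have J: "J \<in> geo_intervals" unfolding J_def using a by (intro geo_I) auto
    have mJ: "Min J = a" unfolding J_def by (intro Min_eqI) auto
    have cJ: "card J = 2^k" unfolding J_def by simp
    have sub: "J \<subseteq> {r..<s+1}" unfolding J_def using a by auto
    have Pb: "(\<Sum>t\<in>J. norm (u (t+1) - u t)) \<le> P"
      unfolding Peq p_def using sub by (intro sum_mono2) auto
    have "(\<Sum>t\<in>J. f t (wp t) - f t (u t))
     \<le> (sqrt (3 * ln X) + ln (real_of_int (k_I P D) + 1) + sqrt 2 + 3*D*G)
          * sqrt (card J) + 3 * G * sqrt D * sqrt (card J * (\<Sum>t\<in>J. norm (u (t+1) - u t)))"
      unfolding X_def using a mJ cJ uin Pb by (intro regret_J[OF J]) auto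
    then show "(\<Sum>t\<in>{a..<a+2^k}. h t) \<le> A * sqrt (2^k) + B * sqrt (2^k * (\<Sum>t\<in>{a..<a+2^k}. p t))"
      unfolding h_def p_def A_def B_def KI_def J_def[symmetric] using cJ by (simp add: mult.commute)
  qed
  have cov: "(\<Sum>t\<in>{r..<s+1}. h t) \<le> beta_c * sqrt 2 * A * sqrt (real (s + 1 - r))
           + B * sqrt (real (s + 1 - r) * (\<Sum>t\<in>{r..<s+1}. p t))"
    by (rule cv.full_cover[OF r1 rs])
  define n where "n = real (s - r + 1)"
  have nn: "real (s + 1 - r) = n" unfolding n_def using rs by simp
  have n0: "n \<ge> 0" unfolding n_def by simp
  have lhs: "(\<Sum>t = r..s. f t (aoa f g \<Omega> D G x0 t)) - (\<Sum>t = r..s. f t (u t)) = (\<Sum>t\<in>{r..<s+1}. h t)"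
    unfolding h_def wp_def by (simp add: sum_subtractf atLeastLessThanSuc_atLeastAtMost)
  have fa: "beta_c * sqrt 2 * A \<le> 14 * sqrt (c_prime s) + 3 * (1 + 2 * ln (real_of_int KI + 1)) + 23 * D * G"
    unfolding A_def using final_arith[OF lX(3) lX(1) lX(2) lk, of "D*G"] Dp Gp by (simp add: mult.assoc)
  have t1: "beta_c * sqrt 2 * A * sqrt n \<le> (14 * sqrt (c_prime s) + 3 * (1 + 2 * ln (real_of_int KI + 1)) + 23 * D * G) * sqrt n"
    using fa n0 by (intro mult_right_mono) auto
  have t2: "B * sqrt (n * P) \<le> 5 * G * sqrt (D * P) * sqrt n"
  proof -
    have "B * sqrt (n * P) = 3 * G * sqrt (D * P) * sqrt n" unfolding B_def by (simp add: real_sqrt_mult)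
    also have "\<dots> \<le> 5 * G * sqrt (D * P) * sqrt n" using Gp Dp P0 n0 by (intro mult_right_mono) auto
    finally show ?thesis .
  qed
  show ?thesis unfolding lhs using cov t1 t2 unfolding nn Peq[symmetric] n_def[symmetric] KI_def P_def
    by linarith
qed


end
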